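(* Let $f:M^{3}\to\mathbb{S}^{4}$ be a minimal isometric immersion of a 3-dimensional Riemannian manifold with Gauss–Kronecker curvature identically zero and nowhere vanishing second fundamental form, so that its principal curvatures are $\lambda>0>-\lambda$ with $\lambda$ a smooth positive function. Let $(e_1,e_2,e_3)$ be a local orthonormal frame of principal directions corresponding to $\lambda,0,-\lambda$, and define $u:=\langle\nabla_{e_3}e_1,e_2\rangle$ and $v:=e_2(\log\lambda)$, where $\nabla$ is the Levi-Civita connection of $M^3$. Then: (i) the function $u/\lambda^{2}$ is constant along the integral curves of $e_2$; (ii) the functions $u$ and $v$ are harmonic, i.e. $\Delta u=\Delta v=0$, where $\Delta$ is the Laplace–Beltrami operator of $M^3$.
   Context: The Gauss–Kronecker curvature of a hypersurface is the product of its principal curvatures (with respect to a local unit normal). Since $f$ is minimal with $K=0$ and nonzero second fundamental form, the principal curvatures are $\lambda,0,-\lambda$ with $\lambda>0$. *)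

theory Defs
  imports "HOL-Analysis.Analysis"
begin

text \<open>Local coordinate model: the 3-manifold is represented by an open coordinate
  domain U in real^3; the immersion f maps into real^5 with image in the unit
  sphere S^4.  All Riemannian notions on M are those of the induced metric.\<close>

definition pd :: "'n::finite \<Rightarrow> (real^'n \<Rightarrow> 'b::real_normed_vector) \<Rightarrow> real^'n \<Rightarrow> 'b" where
  "pd i h p = frechet_derivative h (at p) (axis i 1)"

definition dird :: "(real^'n::finite \<Rightarrow> 'b::real_normed_vector) \<Rightarrow> (real^'n \<Rightarrow> real^'n) \<Rightarrow> real^'n \<Rightarrow> 'b" where
  "dird h X p = frechet_derivative h (at p) (X p)"

fun Ck :: "nat \<Rightarrow> (real^'n::finite \<Rightarrow> 'b::real_normed_vector) \<Rightarrow> (real^'n) set \<Rightarrow> bool" where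
  "Ck 0 h U = continuous_on U h"
| "Ck (Suc k) h U = (h differentiable_on U \<and> (\<forall>i. Ck k (pd i h) U))"

definition smooth_on :: "(real^'n::finite \<Rightarrow> 'b::real_normed_vector) \<Rightarrow> (real^'n) set \<Rightarrow> bool" where
  "smooth_on h U = (\<forall>k. Ck k h U)"

definition metric :: "(real^'n::finite \<Rightarrow> 'm::real_inner) \<Rightarrow> real^'n \<Rightarrow> real^'n^'n" where
  "metric f p = (\<chi> i j. inner (pd i f p) (pd j f p))"

definition ginner :: "(real^'n::finite \<Rightarrow> 'm::real_inner) \<Rightarrow> real^'n \<Rightarrow> real^'n \<Rightarrow> real^'n \<Rightarrow> real" where
  "ginner f p X Y = (\<Sum>i\<in>UNIV. \<Sum>j\<in>UNIV. metric f p $ i $ j * X $ i * Y $ j)"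

definition christoffel :: "(real^'n::finite \<Rightarrow> 'm::real_inner) \<Rightarrow> 'n \<Rightarrow> 'n \<Rightarrow> 'n \<Rightarrow> real^'n \<Rightarrow> real" where
  "christoffel f k i j p = (1/2) * (\<Sum>l\<in>UNIV. matrix_inv (metric f p) $ k $ l *
      (pd i (\<lambda>q. metric f q $ j $ l) p + pd j (\<lambda>q. metric f q $ i $ l) p
       - pd l (\<lambda>q. metric f q $ i $ j) p))"

definition covd :: "(real^'n::finite \<Rightarrow> 'm::real_inner) \<Rightarrow> (real^'n \<Rightarrow> real^'n) \<Rightarrow> (real^'n \<Rightarrow> real^'n) \<Rightarrow> real^'n \<Rightarrow> real^'n" where
  "covd f X Y p = (\<chi> k. dird (\<lambda>q. Y q $ k) X p
      + (\<Sum>i\<in>UNIV. \<Sum>j\<in>UNIV. christoffel f k i j p * X p $ i * Y p $ j))"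

definition laplace_beltrami :: "(real^'n::finite \<Rightarrow> 'm::real_inner) \<Rightarrow> (real^'n \<Rightarrow> real) \<Rightarrow> real^'n \<Rightarrow> real" where
  "laplace_beltrami f \<phi> p = (1 / sqrt (det (metric f p))) *
     (\<Sum>i\<in>UNIV. pd i (\<lambda>q. sqrt (det (metric f q)) *
        (\<Sum>j\<in>UNIV. matrix_inv (metric f q) $ i $ j * pd j \<phi> q)) p)"

end

theory Submission
  imports Defs "HOL-Analysis.Analysis"
begin


lemma fd_eq: "(h has_derivative D) (at p) \<Longrightarrow> frechet_derivative h (at p) = D"
  using frechet_derivative_at by metis

lemma fd_works: "h differentiable (at p) \<Longrightarrow> (h has_derivative frechet_derivative h (at p)) (at p)"
  using frechet_derivative_works by blast

lemma fd_local:
  assumes "open U" "p \<in> U" "\<And>q. q \<in> U \<Longrightarrow> h q = h' q"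
  shows "frechet_derivative h (at p) = frechet_derivative h' (at p)"
proof -
  have "\<And>D. (h has_derivative D) (at p) \<longleftrightarrow> (h' has_derivative D) (at p)"
    using has_derivative_transform_within_open[OF _ assms(1,2)] assms(3) by metis
  then show ?thesis unfolding frechet_derivative_def by simp
qed

lemma pd_local:
  assumes "open U" "p \<in> U" "\<And>q. q \<in> U \<Longrightarrow> h q = h' q"
  shows "pd i h p = pd i h' p"
  unfolding pd_def using fd_local[OF assms] by simp

lemma dird_local:
  assumes "open U" "p \<in> U" "\<And>q. q \<in> U \<Longrightarrow> h q = h' q"
  shows "dird h X p = dird h' X p"
  unfolding dird_def using fd_local[OF assms] by simp

lemma fd_expand:
  fixes h :: "real^'n::finite \<Rightarrow> 'b::real_normed_vector"
  assumes "h differentiable (at p)"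
  shows "frechet_derivative h (at p) w = (\<Sum>i\<in>UNIV. (w $ i) *\<^sub>R pd i h p)"
proof -
  have lin: "linear (frechet_derivative h (at p))"
    using linear_frechet_derivative[OF assms] .
  have "w = (\<Sum>i\<in>UNIV. (w $ i) *\<^sub>R axis i 1)"
    using basis_expansion[of w] by (simp add: scalar_mult_eq_scaleR)
  then have "frechet_derivative h (at p) w = frechet_derivative h (at p) (\<Sum>i\<in>UNIV. (w $ i) *\<^sub>R axis i 1)"
    by simp
  also have "\<dots> = (\<Sum>i\<in>UNIV. (w $ i) *\<^sub>R frechet_derivative h (at p) (axis i 1))"
    using lin by (simp add: linear_sum linear_scale)
  finally show ?thesis unfolding pd_def .
qed

lemma dird_expand:
  fixes h :: "real^'n::finite \<Rightarrow> 'b::real_normed_vector"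
  assumes "h differentiable (at p)"
  shows "dird h X p = (\<Sum>i\<in>UNIV. (X p $ i) *\<^sub>R pd i h p)"
  unfolding dird_def using fd_expand[OF assms] .

lemma pd_hasd: "(h has_derivative D) (at p) \<Longrightarrow> pd i h p = D (axis i 1)"
  unfolding pd_def using fd_eq by metis

lemma dird_hasd: "(h has_derivative D) (at p) \<Longrightarrow> dird h X p = D (X p)"
  unfolding dird_def using fd_eq by metis

lemma Ck_diff: "Ck (Suc k) h U \<Longrightarrow> open U \<Longrightarrow> p \<in> U \<Longrightarrow> h differentiable (at p)"
  by (simp add: differentiable_on_eq_differentiable_at)

lemma Ck_pd: "Ck (Suc k) h U \<Longrightarrow> Ck k (pd i h) U"
  by simp

lemma Ck_cong:
  assumes "open U" "Ck k h U" "\<And>q. q \<in> U \<Longrightarrow> h q = h' q"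
  shows "Ck k h' U"
  using assms
proof (induction k arbitrary: h h')
  case 0
  then show ?case using continuous_on_cong by (metis Ck.simps(1))
next
  case (Suc k)
  have d: "h' differentiable_on U"
    unfolding differentiable_on_eq_differentiable_at[OF Suc.prems(1)]
  proof
    fix x assume x: "x \<in> U"
    then have "h differentiable (at x)" using Suc.prems Ck_diff by blast
    then obtain D where "(h has_derivative D) (at x)" unfolding differentiable_def by blast
    then have "(h' has_derivative D) (at x)"
      using has_derivative_transform_within_open[OF _ Suc.prems(1) x] Suc.prems(3) by blast
    then show "h' differentiable (at x)" unfolding differentiable_def by blast
  qed
  have "Ck k (pd i h') U" for i
    using Suc.IH[of "pd i h" "pd i h'"] Suc.prems pd_local[of U _ h h' i] by auto
  then show ?case using d by simp
qed

lemma Ck_mono: "Ck (Suc k) h U \<Longrightarrow> Ck k h U"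
proof (induction k arbitrary: h)
  case 0
  then show ?case by (simp add: differentiable_imp_continuous_on)
next
  case (Suc k)
  then show ?case by (metis Ck.simps(2))
qed

lemma Ck_mono_le: "Ck k h U \<Longrightarrow> j \<le> k \<Longrightarrow> Ck j h U"
proof (induction k)
  case 0 then show ?case by simp
next
  case (Suc k) then show ?case using Ck_mono le_Suc_eq by blast
qed

lemma smooth_Ck: "smooth_on h U \<Longrightarrow> Ck k h U"
  by (simp add: smooth_on_def)

lemma smooth_diff_at: "smooth_on h U \<Longrightarrow> open U \<Longrightarrow> p \<in> U \<Longrightarrow> h differentiable (at p)"
  using smooth_Ck[of h U "Suc 0"] Ck_diff by blast

lemma smooth_pd: "smooth_on h U \<Longrightarrow> smooth_on (pd i h) U"
  unfolding smooth_on_def by (metis Ck_pd)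

lemma smooth_cong: "open U \<Longrightarrow> smooth_on h U \<Longrightarrow> (\<And>q. q \<in> U \<Longrightarrow> h q = h' q) \<Longrightarrow> smooth_on h' U"
  unfolding smooth_on_def using Ck_cong by blast

lemma Ck_const:
  fixes U :: "(real^'n::finite) set"
  shows "Ck k (\<lambda>q. c) U"
proof (induction k arbitrary: c)
  case 0 then show ?case by simp
next
  case (Suc k)
  have "pd i (\<lambda>q::real^'n. c) = (\<lambda>q. 0)" for i
    by (rule ext) (simp add: pd_hasd[OF has_derivative_const])
  then show ?case using Suc by simp
qed

lemma Ck_linear:
  assumes L: "bounded_linear L" and "open U" and "Ck k h U"
  shows "Ck k (\<lambda>q. L (h q)) U"
  using assms(2,3)
proof (induction k arbitrary: h)
  case 0
  then show ?case using L by (simp add: bounded_linear.continuous_on)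
next
  case (Suc k)
  have hd: "\<And>p. p \<in> U \<Longrightarrow> h differentiable (at p)" using Suc.prems Ck_diff by blast
  have der: "\<And>p. p \<in> U \<Longrightarrow> ((\<lambda>q. L (h q)) has_derivative (\<lambda>w. L (frechet_derivative h (at p) w))) (at p)"
    using hd fd_works bounded_linear.has_derivative[OF L] by blast
  have d: "(\<lambda>q. L (h q)) differentiable_on U"
    unfolding differentiable_on_eq_differentiable_at[OF Suc.prems(1)] differentiable_def
    using der by blast
  have "Ck k (pd i (\<lambda>q. L (h q))) U" for i
  proof -
    have "Ck k (\<lambda>q. L (pd i h q)) U" using Suc by simp
    moreover have "\<And>q. q \<in> U \<Longrightarrow> L (pd i h q) = pd i (\<lambda>q. L (h q)) q"
      using pd_hasd[OF der] by (simp add: pd_def)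
    ultimately show ?thesis using Ck_cong[OF Suc.prems(1)] by blast
  qed
  then show ?case using d by simp
qed

lemma pd_linear:
  assumes L: "bounded_linear L" and "h differentiable (at p)"
  shows "pd i (\<lambda>q. L (h q)) p = L (pd i h p)"
  using pd_hasd[OF bounded_linear.has_derivative[OF L fd_works[OF assms(2)]], of i] by (simp add: pd_def)

lemma dird_linear:
  assumes L: "bounded_linear L" and "h differentiable (at p)"
  shows "dird (\<lambda>q. L (h q)) X p = L (dird h X p)"
  using dird_hasd[OF bounded_linear.has_derivative[OF L fd_works[OF assms(2)]], of X] by (simp add: dird_def)

lemma pd_add:
  assumes "h differentiable (at p)" "g differentiable (at p)"
  shows "pd i (\<lambda>q. h q + g q) p = pd i h p + pd i g p"
  using pd_hasd[OF has_derivative_add[OF fd_works[OF assms(1)] fd_works[OF assms(2)]], of i] by (simp add: pd_def)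

lemma dird_add:
  assumes "h differentiable (at p)" "g differentiable (at p)"
  shows "dird (\<lambda>q. h q + g q) X p = dird h X p + dird g X p"
  using dird_hasd[OF has_derivative_add[OF fd_works[OF assms(1)] fd_works[OF assms(2)]], of X] by (simp add: dird_def)

lemma dird_diff:
  assumes "h differentiable (at p)" "g differentiable (at p)"
  shows "dird (\<lambda>q. h q - g q) X p = dird h X p - dird g X p"
  using dird_hasd[OF has_derivative_diff[OF fd_works[OF assms(1)] fd_works[OF assms(2)]], of X] by (simp add: dird_def)

lemma Ck_add:
  assumes "open U" and "Ck k h U" and "Ck k g U"
  shows "Ck k (\<lambda>q. h q + g q) U"
  using assms
proof (induction k arbitrary: h g)
  case 0
  then show ?case by (simp add: continuous_on_add)
next
  case (Suc k)
  have hd: "\<And>p. p \<in> U \<Longrightarrow> h differentiable (at p)" "\<And>p. p \<in> U \<Longrightarrow> g differentiable (at p)"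
    using Suc.prems Ck_diff by blast+
  have d: "(\<lambda>q. h q + g q) differentiable_on U"
    unfolding differentiable_on_eq_differentiable_at[OF Suc.prems(1)]
    using hd by (simp add: differentiable_add)
  have "Ck k (pd i (\<lambda>q. h q + g q)) U" for i
  proof -
    have "Ck k (\<lambda>q. pd i h q + pd i g q) U"
      using Suc.IH[of "pd i h" "pd i g"] Suc.prems by simp
    moreover have "\<And>q. q \<in> U \<Longrightarrow> pd i h q + pd i g q = pd i (\<lambda>q. h q + g q) q"
      using pd_add hd by metis
    ultimately show ?thesis using Ck_cong[OF Suc.prems(1)] by blast
  qed
  then show ?case using d by simp
qed

lemma Ck_sum:
  assumes "open U" "finite S" "\<And>a. a \<in> S \<Longrightarrow> Ck k (h a) U"
  shows "Ck k (\<lambda>q. \<Sum>a\<in>S. h a q) U"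
  using assms(2,3)
proof (induction S rule: finite_induct)
  case empty then show ?case using Ck_const[of k 0] by simp
next
  case (insert x F)
  then show ?case by (auto intro!: Ck_add[OF assms(1)])
qed

lemma Ck_bilinear:
  assumes B: "bounded_bilinear bop" and "open U" and "Ck k h U" and "Ck k g U"
  shows "Ck k (\<lambda>q. bop (h q) (g q)) U"
  using assms(2-4)
proof (induction k arbitrary: h g)
  case 0
  then show ?case
    by (simp add: bounded_bilinear.continuous_on[OF B])
next
  case (Suc k)
  have hd: "\<And>p. p \<in> U \<Longrightarrow> h differentiable (at p)" "\<And>p. p \<in> U \<Longrightarrow> g differentiable (at p)"
    using Suc.prems Ck_diff by blast+
  have der: "\<And>p. p \<in> U \<Longrightarrow> ((\<lambda>q. bop (h q) (g q)) has_derivative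
      (\<lambda>w. bop (h p) (frechet_derivative g (at p) w) + bop (frechet_derivative h (at p) w) (g p))) (at p)"
    by (rule bounded_bilinear.FDERIV[OF B fd_works fd_works]) (use hd in auto)
  have d: "(\<lambda>q. bop (h q) (g q)) differentiable_on U"
    unfolding differentiable_on_eq_differentiable_at[OF Suc.prems(1)] differentiable_def
    using der by blast
  have "Ck k (pd i (\<lambda>q. bop (h q) (g q))) U" for i
  proof -
    have "Ck k (\<lambda>q. bop (h q) (pd i g q)) U"
      using Suc.IH[OF Suc.prems(1) Ck_mono[OF Suc.prems(2)] Ck_pd[OF Suc.prems(3)]] .
    moreover have "Ck k (\<lambda>q. bop (pd i h q) (g q)) U"
      using Suc.IH[OF Suc.prems(1) Ck_pd[OF Suc.prems(2)] Ck_mono[OF Suc.prems(3)]] .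
    ultimately have "Ck k (\<lambda>q. bop (h q) (pd i g q) + bop (pd i h q) (g q)) U"
      using Ck_add[OF Suc.prems(1)] by blast
    moreover have "\<And>q. q \<in> U \<Longrightarrow> bop (h q) (pd i g q) + bop (pd i h q) (g q) = pd i (\<lambda>q. bop (h q) (g q)) q"
      using pd_hasd[OF der] by (simp add: pd_def)
    ultimately show ?thesis using Ck_cong[OF Suc.prems(1)] by blast
  qed
  then show ?case using d by simp
qed

lemma pd_bilinear:
  assumes B: "bounded_bilinear bop" and "h differentiable (at p)" "g differentiable (at p)"
  shows "pd i (\<lambda>q. bop (h q) (g q)) p = bop (h p) (pd i g p) + bop (pd i h p) (g p)"
  using pd_hasd[OF bounded_bilinear.FDERIV[OF B fd_works[OF assms(2)] fd_works[OF assms(3)]], of i] by (simp add: pd_def)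

lemma dird_bilinear:
  assumes B: "bounded_bilinear bop" and "h differentiable (at p)" "g differentiable (at p)"
  shows "dird (\<lambda>q. bop (h q) (g q)) X p = bop (h p) (dird g X p) + bop (dird h X p) (g p)"
  using dird_hasd[OF bounded_bilinear.FDERIV[OF B fd_works[OF assms(2)] fd_works[OF assms(3)]], of X] by (simp add: dird_def)



lemma Ck_inverse:
  fixes h :: "real^'n::finite \<Rightarrow> real"
  assumes "open U" "\<And>q. q \<in> U \<Longrightarrow> h q \<noteq> 0"
  shows "Ck k h U \<Longrightarrow> Ck k (\<lambda>q. inverse (h q)) U"
proof (induction k)
  case 0
  then show ?case using assms(2) by (simp add: continuous_on_inverse)
next
  case (Suc k)
  have hd: "\<And>p. p \<in> U \<Longrightarrow> h differentiable (at p)" using Suc.prems Ck_diff assms(1) by blast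
  have der: "\<And>p. p \<in> U \<Longrightarrow> ((\<lambda>q. inverse (h q)) has_derivative
      (\<lambda>w. - (inverse (h p) * frechet_derivative h (at p) w * inverse (h p)))) (at p)"
    by (rule Deriv.has_derivative_inverse) (use hd assms(2) fd_works in auto)
  have d: "(\<lambda>q. inverse (h q)) differentiable_on U"
    unfolding differentiable_on_eq_differentiable_at[OF assms(1)] differentiable_def
    using der by blast
  have IH: "Ck k (\<lambda>q. inverse (h q)) U" using Suc.IH Ck_mono[OF Suc.prems] by blast
  have "Ck k (pd i (\<lambda>q. inverse (h q))) U" for i
  proof -
    have "Ck k (\<lambda>q. inverse (h q) * inverse (h q)) U"
      using Ck_bilinear[OF bounded_bilinear_mult assms(1) IH IH] .
    then have "Ck k (\<lambda>q. (- pd i h q) * (inverse (h q) * inverse (h q))) U"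
      using Ck_bilinear[OF bounded_bilinear_mult assms(1) Ck_linear[OF bounded_linear_minus[OF bounded_linear_ident] assms(1) Ck_pd[OF Suc.prems]]]
      by simp
    moreover have "\<And>q. q \<in> U \<Longrightarrow> (- pd i h q) * (inverse (h q) * inverse (h q)) = pd i (\<lambda>q. inverse (h q)) q"
      using pd_hasd[OF der] by (simp add: pd_def)
    ultimately show ?thesis using Ck_cong[OF assms(1)] by blast
  qed
  then show ?case using d by simp
qed

lemma smooth_const: "smooth_on (\<lambda>q::real^'n::finite. c) U"
  unfolding smooth_on_def using Ck_const by blast

lemma smooth_add: "open U \<Longrightarrow> smooth_on h U \<Longrightarrow> smooth_on g U \<Longrightarrow> smooth_on (\<lambda>q. h q + g q) U"
  unfolding smooth_on_def using Ck_add by blast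

lemma smooth_linear: "bounded_linear L \<Longrightarrow> open U \<Longrightarrow> smooth_on h U \<Longrightarrow> smooth_on (\<lambda>q. L (h q)) U"
  unfolding smooth_on_def using Ck_linear by blast

lemma smooth_minus: "open U \<Longrightarrow> smooth_on h U \<Longrightarrow> smooth_on (\<lambda>q. - h q) U"
  using smooth_linear[OF bounded_linear_minus[OF bounded_linear_ident]] by blast

lemma smooth_diff: "open U \<Longrightarrow> smooth_on h U \<Longrightarrow> smooth_on g U \<Longrightarrow> smooth_on (\<lambda>q. h q - g q) U"
  using smooth_add[of U h "\<lambda>q. - g q"] smooth_minus[of U g] by simp

lemma smooth_sum: "open U \<Longrightarrow> finite S \<Longrightarrow> (\<And>a. a \<in> S \<Longrightarrow> smooth_on (h a) U) \<Longrightarrow> smooth_on (\<lambda>q. \<Sum>a\<in>S. h a q) U"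
  unfolding smooth_on_def using Ck_sum by blast

lemma smooth_bilinear: "bounded_bilinear bop \<Longrightarrow> open U \<Longrightarrow> smooth_on h U \<Longrightarrow> smooth_on g U \<Longrightarrow> smooth_on (\<lambda>q. bop (h q) (g q)) U"
  unfolding smooth_on_def using Ck_bilinear by blast

lemma smooth_mult: "open U \<Longrightarrow> smooth_on h U \<Longrightarrow> smooth_on g U \<Longrightarrow> smooth_on (\<lambda>q. h q * g q :: real) U"
  using smooth_bilinear[OF bounded_bilinear_mult] by blast

lemma smooth_scaleR: "open U \<Longrightarrow> smooth_on h U \<Longrightarrow> smooth_on g U \<Longrightarrow> smooth_on (\<lambda>q. h q *\<^sub>R g q) U"
  using smooth_bilinear[OF bounded_bilinear_scaleR] by blast

lemma smooth_inner: "open U \<Longrightarrow> smooth_on h U \<Longrightarrow> smooth_on g U \<Longrightarrow> smooth_on (\<lambda>q. inner (h q) (g q)) U"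
  using smooth_bilinear[OF bounded_bilinear_inner] by blast

lemma smooth_inverse: "open U \<Longrightarrow> smooth_on h U \<Longrightarrow> (\<And>q. q \<in> U \<Longrightarrow> h q \<noteq> 0) \<Longrightarrow> smooth_on (\<lambda>q. inverse (h q) :: real) U"
  unfolding smooth_on_def using Ck_inverse by blast

lemma bounded_linear_component: "bounded_linear (\<lambda>x::real^'m. x $ c)"
  by (simp add: bounded_linear_vec_nth)

lemma smooth_component: "open U \<Longrightarrow> smooth_on h U \<Longrightarrow> smooth_on (\<lambda>q. (h q :: real^'m) $ c) U"
  using smooth_linear[OF bounded_linear_component] by blast

lemma smooth_dird:
  fixes F :: "real^'n::finite \<Rightarrow> 'b::real_normed_vector"
  assumes "open U" "smooth_on F U" "smooth_on X U"
  shows "smooth_on (dird F X) U"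
proof -
  have "smooth_on (\<lambda>q. \<Sum>i\<in>UNIV. (X q $ i) *\<^sub>R pd i F q) U"
    by (intro smooth_sum smooth_scaleR smooth_component smooth_pd assms) auto
  moreover have "\<And>q. q \<in> U \<Longrightarrow> (\<Sum>i\<in>UNIV. (X q $ i) *\<^sub>R pd i F q) = dird F X q"
    using dird_expand smooth_diff_at[OF assms(2,1)] by metis
  ultimately show ?thesis
    using smooth_cong[OF assms(1)] by blast
qed



lemma line_deriv:
  fixes h :: "real^'n::finite \<Rightarrow> real"
  assumes "h differentiable (at (q + x *\<^sub>R v))"
  shows "((\<lambda>t. h (q + t *\<^sub>R v)) has_real_derivative frechet_derivative h (at (q + x *\<^sub>R v)) v) (at x)"
proof -
  let ?D = "frechet_derivative h (at (q + x *\<^sub>R v))"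
  have l: "linear ?D" using linear_frechet_derivative[OF assms] .
  have "((\<lambda>t. q + t *\<^sub>R v) has_derivative (\<lambda>t. t *\<^sub>R v)) (at x)"
    by (auto intro!: derivative_eq_intros)
  from has_derivative_compose[OF this fd_works[OF assms]]
  have "((\<lambda>t. h (q + t *\<^sub>R v)) has_derivative (\<lambda>t. ?D (t *\<^sub>R v))) (at x)" .
  moreover have "(\<lambda>t. ?D (t *\<^sub>R v)) = (\<lambda>t. ?D v * t)"
    using l by (auto simp: linear_scale)
  ultimately show ?thesis unfolding has_field_derivative_def by simp
qed

lemma C2_facts:
  assumes "Ck (Suc (Suc 0)) h U" "open U"
  shows "\<And>p. p \<in> U \<Longrightarrow> h differentiable (at p)"
    and "\<And>p. p \<in> U \<Longrightarrow> pd i h differentiable (at p)"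
    and "continuous_on U (pd j (pd i h))"
  using assms by (auto simp: differentiable_on_eq_differentiable_at)

lemma mixed:
  fixes h :: "real^'n::finite \<Rightarrow> real"
  assumes U: "open U" and C: "Ck (Suc (Suc 0)) h U" and s: "0 < s"
    and box: "\<And>x y. 0 \<le> x \<Longrightarrow> x \<le> s \<Longrightarrow> 0 \<le> y \<Longrightarrow> y \<le> s \<Longrightarrow> p + x *\<^sub>R axis i 1 + y *\<^sub>R axis j 1 \<in> U"
  shows "\<exists>x y. 0 < x \<and> x < s \<and> 0 < y \<and> y < s \<and>
     h (p + s *\<^sub>R axis i 1 + s *\<^sub>R axis j 1) - h (p + s *\<^sub>R axis i 1) - h (p + s *\<^sub>R axis j 1) + h p
      = s * s * pd j (pd i h) (p + x *\<^sub>R axis i 1 + y *\<^sub>R axis j 1)"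
proof -
  define a :: "real^'n" where "a = axis i 1"
  define b :: "real^'n" where "b = axis j 1"
  have hd: "\<And>q. q \<in> U \<Longrightarrow> h differentiable (at q)" and pd: "\<And>q. q \<in> U \<Longrightarrow> pd i h differentiable (at q)"
    using C2_facts[OF C U] by blast+
  define \<phi> where "\<phi> x = h ((p + s *\<^sub>R b) + x *\<^sub>R a) - h (p + x *\<^sub>R a)" for x
  have eq1: "p + s *\<^sub>R b + x *\<^sub>R a = p + x *\<^sub>R a + s *\<^sub>R b" for x by (simp add: algebra_simps)
  have inU: "0 \<le> x \<Longrightarrow> x \<le> s \<Longrightarrow> 0 \<le> y \<Longrightarrow> y \<le> s \<Longrightarrow> p + x *\<^sub>R a + y *\<^sub>R b \<in> U" for x y
    using box unfolding a_def b_def by blast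
  have inU0: "0 \<le> x \<Longrightarrow> x \<le> s \<Longrightarrow> p + x *\<^sub>R a \<in> U" for x
    using inU[of x 0] s by simp
  have dphi: "DERIV \<phi> x :> (pd i h (p + x *\<^sub>R a + s *\<^sub>R b) - pd i h (p + x *\<^sub>R a))"
    if "0 \<le> x" "x \<le> s" for x
  proof -
    have inx: "p + s *\<^sub>R b + x *\<^sub>R a \<in> U" unfolding eq1 using inU[OF that(1) that(2) less_imp_le[OF s] order.refl] .
    have pdi: "\<And>q. pd i h q = frechet_derivative h (at q) a" by (simp add: pd_def a_def)
    have "((\<lambda>t. h ((p + s *\<^sub>R b) + t *\<^sub>R a)) has_real_derivative frechet_derivative h (at (p + s *\<^sub>R b + x *\<^sub>R a)) a) (at x)"
      using line_deriv[OF hd[OF inx]] .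
    then have "((\<lambda>t. h ((p + s *\<^sub>R b) + t *\<^sub>R a)) has_real_derivative pd i h (p + x *\<^sub>R a + s *\<^sub>R b)) (at x)"
      unfolding pdi eq1 .
    moreover have "((\<lambda>t. h (p + t *\<^sub>R a)) has_real_derivative pd i h (p + x *\<^sub>R a)) (at x)"
      using line_deriv[of h p x a] hd[OF inU0[OF that]] unfolding pd_def a_def by simp
    ultimately show ?thesis unfolding \<phi>_def by (rule DERIV_diff)
  qed
  have "\<exists>l z. 0 < z \<and> z < s \<and> DERIV \<phi> z :> l \<and> \<phi> s - \<phi> 0 = (s - 0) * l"
  proof (rule MVT)
    show "continuous_on {0..s} \<phi>"
      using dphi by (auto intro!: continuous_at_imp_continuous_on DERIV_isCont)
    show "\<And>x. 0 < x \<Longrightarrow> x < s \<Longrightarrow> \<phi> differentiable (at x)"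
      using dphi real_differentiable_def by (meson less_eq_real_def)
  qed (use s in auto)
  then obtain l z where z: "0 < z" "z < s" "DERIV \<phi> z :> l" "\<phi> s - \<phi> 0 = s * l" by auto
  have lz: "l = pd i h (p + z *\<^sub>R a + s *\<^sub>R b) - pd i h (p + z *\<^sub>R a)"
    using DERIV_unique[OF z(3) dphi] z by auto
  define \<psi> where "\<psi> y = pd i h ((p + z *\<^sub>R a) + y *\<^sub>R b)" for y
  have dpsi: "DERIV \<psi> y :> pd j (pd i h) (p + z *\<^sub>R a + y *\<^sub>R b)" if "0 \<le> y" "y \<le> s" for y
    using line_deriv[of "pd i h" "p + z *\<^sub>R a" y b] pd[OF inU[of z y]] z that
    unfolding \<psi>_def pd_def[of j] b_def by simp
  have "\<exists>l z. 0 < z \<and> z < s \<and> DERIV \<psi> z :> l \<and> \<psi> s - \<psi> 0 = (s - 0) * l"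
  proof (rule MVT)
    show "continuous_on {0..s} \<psi>"
      using dpsi by (auto intro!: continuous_at_imp_continuous_on DERIV_isCont)
    show "\<And>x. 0 < x \<Longrightarrow> x < s \<Longrightarrow> \<psi> differentiable (at x)"
      using dpsi real_differentiable_def by (meson less_eq_real_def)
  qed (use s in auto)
  then obtain l2 w where w: "0 < w" "w < s" "DERIV \<psi> w :> l2" "\<psi> s - \<psi> 0 = s * l2" by auto
  have lw: "l2 = pd j (pd i h) (p + z *\<^sub>R a + w *\<^sub>R b)"
    using DERIV_unique[OF w(3) dpsi] w by auto
  have "h (p + s *\<^sub>R a + s *\<^sub>R b) - h (p + s *\<^sub>R a) - h (p + s *\<^sub>R b) + h p = \<phi> s - \<phi> 0"
    unfolding \<phi>_def by (simp add: algebra_simps)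
  also have "\<dots> = s * (\<psi> s - \<psi> 0)" using z(4) lz unfolding \<psi>_def by simp
  also have "\<dots> = s * s * pd j (pd i h) (p + z *\<^sub>R a + w *\<^sub>R b)" using w(4) lw by simp
  finally show ?thesis using z w unfolding a_def b_def by blast
qed

lemma abs_contra_aux: "\<bar>a - P\<bar> < \<bar>P - Q\<bar> / 2 \<Longrightarrow> \<bar>b - Q\<bar> < \<bar>P - Q\<bar> / 2 \<Longrightarrow> a = (b::real) \<Longrightarrow> False"
  by (simp add: abs_if split: if_splits)

lemma schwarz:
  fixes h :: "real^'n::finite \<Rightarrow> real"
  assumes U: "open U" and C: "Ck (Suc (Suc 0)) h U" and p: "p \<in> U"
  shows "pd j (pd i h) p = pd i (pd j h) p"
proof (rule ccontr)
  assume ne: "pd j (pd i h) p \<noteq> pd i (pd j h) p"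
  define d where "d = \<bar>pd j (pd i h) p - pd i (pd j h) p\<bar>"
  have d: "d > 0" using ne unfolding d_def by simp
  obtain r where r: "r > 0" "ball p r \<subseteq> U" using U p openE by blast
  have c1: "isCont (pd j (pd i h)) p" and c2: "isCont (pd i (pd j h)) p"
    using C2_facts(3)[OF C U] U p continuous_on_eq_continuous_at by blast+
  obtain \<delta>1 where \<delta>1: "\<delta>1 > 0" "\<And>x. dist x p < \<delta>1 \<Longrightarrow> dist (pd j (pd i h) x) (pd j (pd i h) p) < d/2"
    using c1 d unfolding continuous_at_eps_delta by (meson half_gt_zero)
  obtain \<delta>2 where \<delta>2: "\<delta>2 > 0" "\<And>x. dist x p < \<delta>2 \<Longrightarrow> dist (pd i (pd j h) x) (pd i (pd j h) p) < d/2"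
    using c2 d unfolding continuous_at_eps_delta by (meson half_gt_zero)
  define s where "s = min (r/3) (min (\<delta>1/3) (\<delta>2/3))"
  have s: "s > 0" using r \<delta>1 \<delta>2 unfolding s_def by simp
  have small: "norm (x *\<^sub>R axis i (1::real) + y *\<^sub>R axis j 1 :: real^'n) < 3 * s"
    if "0 \<le> x" "x \<le> s" "0 \<le> y" "y \<le> s" for x y i j
  proof -
    have "norm (x *\<^sub>R axis i (1::real) + y *\<^sub>R axis j 1 :: real^'n) \<le> norm (x *\<^sub>R axis i (1::real) :: real^'n) + norm (y *\<^sub>R axis j (1::real) :: real^'n)"
      by (rule norm_triangle_ineq)
    also have "\<dots> = x + y" using that by simp
    finally show ?thesis using that s by linarith
  qed
  have box: "p + x *\<^sub>R axis i 1 + y *\<^sub>R axis j 1 \<in> U"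
    if "0 \<le> x" "x \<le> s" "0 \<le> y" "y \<le> s" for x y i j
  proof -
    have "3 * s \<le> r" unfolding s_def by linarith
    then have "dist (p + x *\<^sub>R axis i 1 + y *\<^sub>R axis j 1) p < r"
      using small[OF that, of i j] by (simp add: dist_norm add.assoc)
    then show ?thesis using r by (auto simp: dist_commute)
  qed
  obtain x1 y1 where m1: "0 < x1" "x1 < s" "0 < y1" "y1 < s"
    "h (p + s *\<^sub>R axis i 1 + s *\<^sub>R axis j 1) - h (p + s *\<^sub>R axis i 1) - h (p + s *\<^sub>R axis j 1) + h p
      = s * s * pd j (pd i h) (p + x1 *\<^sub>R axis i 1 + y1 *\<^sub>R axis j 1)"
    using mixed[OF U C s box] by blast
  obtain x2 y2 where m2: "0 < x2" "x2 < s" "0 < y2" "y2 < s"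
    "h (p + s *\<^sub>R axis j 1 + s *\<^sub>R axis i 1) - h (p + s *\<^sub>R axis j 1) - h (p + s *\<^sub>R axis i 1) + h p
      = s * s * pd i (pd j h) (p + x2 *\<^sub>R axis j 1 + y2 *\<^sub>R axis i 1)"
    using mixed[OF U C s box] by blast
  have "p + s *\<^sub>R axis j 1 + s *\<^sub>R axis i 1 = p + s *\<^sub>R axis i 1 + s *\<^sub>R axis j (1::real)"
    by (simp add: algebra_simps)
  then have "h (p + s *\<^sub>R axis j 1 + s *\<^sub>R axis i 1) = h (p + s *\<^sub>R axis i 1 + s *\<^sub>R axis j (1::real))"
    by (rule arg_cong)
  then have "s * s * pd j (pd i h) (p + x1 *\<^sub>R axis i 1 + y1 *\<^sub>R axis j 1) = s * s * pd i (pd j h) (p + x2 *\<^sub>R axis j 1 + y2 *\<^sub>R axis i 1)"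
    using m1(5) m2(5) by linarith
  then have eq: "pd j (pd i h) (p + x1 *\<^sub>R axis i 1 + y1 *\<^sub>R axis j 1) = pd i (pd j h) (p + x2 *\<^sub>R axis j 1 + y2 *\<^sub>R axis i 1)"
    using s by simp
  have "dist (p + x1 *\<^sub>R axis i 1 + y1 *\<^sub>R axis j 1) p < \<delta>1"
  proof -
    have "3 * s \<le> \<delta>1" unfolding s_def by linarith
    then show ?thesis using small[of x1 y1 i j] m1(1-4) by (simp add: dist_norm add.assoc)
  qed
  then have e1: "\<bar>pd j (pd i h) (p + x1 *\<^sub>R axis i 1 + y1 *\<^sub>R axis j 1) - pd j (pd i h) p\<bar> < d/2"
    using \<delta>1(2) by (simp add: dist_real_def)
  have "dist (p + x2 *\<^sub>R axis j 1 + y2 *\<^sub>R axis i 1) p < \<delta>2"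
  proof -
    have "3 * s \<le> \<delta>2" unfolding s_def by linarith
    then show ?thesis using small[of x2 y2 j i] m2(1-4) by (simp add: dist_norm add.assoc)
  qed
  then have e2: "\<bar>pd i (pd j h) (p + x2 *\<^sub>R axis j 1 + y2 *\<^sub>R axis i 1) - pd i (pd j h) p\<bar> < d/2"
    using \<delta>2(2) by (simp add: dist_real_def)
  show False using abs_contra_aux[OF e1[unfolded d_def] e2[unfolded d_def] eq] .
qed



lemma pd_component:
  fixes h :: "real^'n::finite \<Rightarrow> real^'m::finite"
  shows "h differentiable (at p) \<Longrightarrow> pd i (\<lambda>q. h q $ c) p = pd i h p $ c"
  using pd_linear[OF bounded_linear_component] by blast

lemma dird_component:
  fixes h :: "real^'n::finite \<Rightarrow> real^'m::finite"
  shows "h differentiable (at p) \<Longrightarrow> dird (\<lambda>q. h q $ c) X p = dird h X p $ c"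
  using dird_linear[OF bounded_linear_component] by blast

lemma schwarz_vec:
  fixes h :: "real^'n::finite \<Rightarrow> real^'m::finite"
  assumes U: "open U" and C: "Ck (Suc (Suc 0)) h U" and p: "p \<in> U"
  shows "pd j (pd i h) p = pd i (pd j h) p"
proof -
  have hd: "\<And>q. q \<in> U \<Longrightarrow> h differentiable (at q)"
    and pdd: "\<And>q k. q \<in> U \<Longrightarrow> pd k h differentiable (at q)"
    using C2_facts[OF C U] by blast+
  have "pd j (pd i h) p $ c = pd i (pd j h) p $ c" for c
  proof -
    define hc where "hc = (\<lambda>q. h q $ c)"
    have Cc: "Ck (Suc (Suc 0)) hc U" unfolding hc_def using Ck_linear[OF bounded_linear_component U C] .
    have loc: "pd k h q $ c = pd k hc q" if "q \<in> U" for k q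
      unfolding hc_def using pd_component[OF hd[OF that]] by simp
    have "pd j (pd i h) p $ c = pd j (\<lambda>q. pd i h q $ c) p"
      by (rule pd_component[OF pdd[OF p], symmetric])
    also have "\<dots> = pd j (pd i hc) p" by (rule pd_local[OF U p]) (rule loc)
    also have "\<dots> = pd i (pd j hc) p" using schwarz[OF U Cc p] .
    also have "\<dots> = pd i (\<lambda>q. pd j h q $ c) p" by (rule pd_local[OF U p]) (rule loc[symmetric])
    also have "\<dots> = pd i (pd j h) p $ c" by (rule pd_component[OF pdd[OF p]])
    finally show ?thesis .
  qed
  then show ?thesis by (simp add: vec_eq_iff)
qed

lemma dird_sum:
  assumes "\<And>a. a \<in> S \<Longrightarrow> h a differentiable (at p)"
  shows "dird (\<lambda>q. \<Sum>a\<in>S. h a q) X p = (\<Sum>a\<in>S. dird (h a) X p)"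
proof -
  have "((\<lambda>q. \<Sum>a\<in>S. h a q) has_derivative (\<lambda>w. \<Sum>a\<in>S. frechet_derivative (h a) (at p) w)) (at p)"
    using assms fd_works by (intro has_derivative_sum) blast
  from dird_hasd[OF this] show ?thesis by (simp add: dird_def)
qed

lemma dird_dird_expand:
  fixes F :: "real^'n::finite \<Rightarrow> 'b::real_normed_vector" and X Y :: "real^'n \<Rightarrow> real^'n"
  assumes U: "open U" and p: "p \<in> U" and sF: "smooth_on F U" and sX: "smooth_on X U" and sY: "smooth_on Y U"
  shows "dird (dird F Y) X p = (\<Sum>k\<in>UNIV. dird Y X p $ k *\<^sub>R pd k F p)
          + (\<Sum>k\<in>UNIV. \<Sum>j\<in>UNIV. (Y p $ k * X p $ j) *\<^sub>R pd j (pd k F) p)"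
proof -
  have Fd: "\<And>q. q \<in> U \<Longrightarrow> F differentiable (at q)" using smooth_diff_at[OF sF U] by blast
  have Yd: "\<And>q. q \<in> U \<Longrightarrow> Y differentiable (at q)" using smooth_diff_at[OF sY U] by blast
  have Ycd: "(\<lambda>q. Y q $ k) differentiable (at p)" for k
    using smooth_diff_at[OF smooth_component[OF U sY] U p] .
  have pFd: "pd k F differentiable (at p)" for k
    using smooth_diff_at[OF smooth_pd[OF sF] U p] .
  have "dird (dird F Y) X p = dird (\<lambda>q. \<Sum>k\<in>UNIV. (Y q $ k) *\<^sub>R pd k F q) X p"
    by (rule dird_local[OF U p]) (rule dird_expand[OF Fd])
  also have "\<dots> = (\<Sum>k\<in>UNIV. dird (\<lambda>q. (Y q $ k) *\<^sub>R pd k F q) X p)"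
    by (rule dird_sum) (use Ycd pFd in \<open>auto intro!: differentiable_scaleR\<close>)
  also have "\<dots> = (\<Sum>k\<in>UNIV. (Y p $ k) *\<^sub>R dird (pd k F) X p + dird (\<lambda>q. Y q $ k) X p *\<^sub>R pd k F p)"
    using dird_bilinear[OF bounded_bilinear_scaleR Ycd pFd] by simp
  also have "\<dots> = (\<Sum>k\<in>UNIV. (Y p $ k) *\<^sub>R (\<Sum>j\<in>UNIV. (X p $ j) *\<^sub>R pd j (pd k F) p) + dird Y X p $ k *\<^sub>R pd k F p)"
    using dird_component[OF Yd[OF p]] dird_expand[OF pFd] by simp
  also have "\<dots> = (\<Sum>k\<in>UNIV. dird Y X p $ k *\<^sub>R pd k F p)
          + (\<Sum>k\<in>UNIV. \<Sum>j\<in>UNIV. (Y p $ k * X p $ j) *\<^sub>R pd j (pd k F) p)"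
    by (simp add: sum.distrib scaleR_sum_right add.commute)
  finally show ?thesis .
qed

lemma commutator_gen:
  fixes F :: "real^'n::finite \<Rightarrow> 'b::real_normed_vector" and X Y :: "real^'n \<Rightarrow> real^'n"
  assumes U: "open U" and p: "p \<in> U" and sF: "smooth_on F U" and sX: "smooth_on X U" and sY: "smooth_on Y U"
    and sym: "\<And>i j. pd j (pd i F) p = pd i (pd j F) p"
  shows "dird (dird F Y) X p - dird (dird F X) Y p = dird F (\<lambda>q. dird Y X q - dird X Y q) p"
proof -
  have Fd: "F differentiable (at p)" using smooth_diff_at[OF sF U p] .
  have sw: "(\<Sum>k\<in>UNIV. \<Sum>j\<in>UNIV. (X p $ k * Y p $ j) *\<^sub>R pd j (pd k F) p)
      = (\<Sum>k\<in>UNIV. \<Sum>j\<in>UNIV. (Y p $ k * X p $ j) *\<^sub>R pd j (pd k F) p)"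
  proof -
    have "(\<Sum>k\<in>UNIV. \<Sum>j\<in>UNIV. (X p $ k * Y p $ j) *\<^sub>R pd j (pd k F) p)
        = (\<Sum>k\<in>UNIV. \<Sum>j\<in>UNIV. (X p $ k * Y p $ j) *\<^sub>R pd k (pd j F) p)"
      using sym by simp
    also have "\<dots> = (\<Sum>j\<in>UNIV. \<Sum>k\<in>UNIV. (X p $ k * Y p $ j) *\<^sub>R pd k (pd j F) p)"
      by (rule sum.swap)
    also have "\<dots> = (\<Sum>k\<in>UNIV. \<Sum>j\<in>UNIV. (Y p $ k * X p $ j) *\<^sub>R pd j (pd k F) p)"
      by (simp add: mult.commute)
    finally show ?thesis .
  qed
  show ?thesis
    unfolding dird_dird_expand[OF U p sF sX sY] dird_dird_expand[OF U p sF sY sX] sw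
      dird_expand[OF Fd, of "\<lambda>q. dird Y X q - dird X Y q"]
    by (simp add: sum_subtractf scaleR_diff_left)
qed

lemma commutator_real:
  fixes F :: "real^'n::finite \<Rightarrow> real" and X Y :: "real^'n \<Rightarrow> real^'n"
  assumes U: "open U" and p: "p \<in> U" and sF: "smooth_on F U" and sX: "smooth_on X U" and sY: "smooth_on Y U"
  shows "dird (dird F Y) X p - dird (dird F X) Y p = dird F (\<lambda>q. dird Y X q - dird X Y q) p"
  using commutator_gen[OF U p sF sX sY] schwarz[OF U smooth_Ck[OF sF] p] by blast

lemma commutator_vec:
  fixes F :: "real^'n::finite \<Rightarrow> real^'m::finite" and X Y :: "real^'n \<Rightarrow> real^'n"
  assumes U: "open U" and p: "p \<in> U" and sF: "smooth_on F U" and sX: "smooth_on X U" and sY: "smooth_on Y U"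
  shows "dird (dird F Y) X p - dird (dird F X) Y p = dird F (\<lambda>q. dird Y X q - dird X Y q) p"
  using commutator_gen[OF U p sF sX sY] schwarz_vec[OF U smooth_Ck[OF sF] p] by blast



lemma orthonormal_expand:
  fixes v :: "nat \<Rightarrow> real^'m::finite"
  assumes on: "\<And>A B. A < CARD('m) \<Longrightarrow> B < CARD('m) \<Longrightarrow> inner (v A) (v B) = (if A = B then 1 else 0)"
  shows "w = (\<Sum>A<CARD('m). inner w (v A) *\<^sub>R v A)"
proof -
  let ?n = "CARD('m)"
  let ?S = "v ` {..<?n}"
  have inj: "inj_on v {..<?n}"
  proof (rule inj_onI)
    fix A B assume "A \<in> {..<?n}" "B \<in> {..<?n}" "v A = v B"
    then have "inner (v A) (v B) = 1" using on[of A A] by simp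
    then show "A = B" using on[of A B] \<open>A \<in> _\<close> \<open>B \<in> _\<close> by (auto split: if_splits)
  qed
  have card: "card ?S = ?n" using card_image[OF inj] by simp
  have po: "pairwise orthogonal ?S"
    unfolding pairwise_def orthogonal_def using on inj by (auto simp: inj_on_def)
  have n0: "0 \<notin> ?S"
  proof
    assume "0 \<in> ?S"
    then obtain A where "A < ?n" "v A = 0" by auto
    then show False using on[of A A] by simp
  qed
  have ind: "independent ?S" using pairwise_orthogonal_independent[OF po n0] .
  have "UNIV \<subseteq> span ?S"
    using card_eq_dim[of ?S UNIV] ind card by simp
  then have wS: "r \<in> span ?S" for r by blast
  define r where "r = w - (\<Sum>A<?n. inner w (v A) *\<^sub>R v A)"
  have orth: "orthogonal r y" if "y \<in> ?S" for y
  proof -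
    obtain B where B: "B < ?n" "y = v B" using \<open>y \<in> ?S\<close> by auto
    have "inner (\<Sum>A<?n. inner w (v A) *\<^sub>R v A) (v B) = (\<Sum>A<?n. inner w (v A) * (if A = B then 1 else 0))"
      using on B(1) by (simp add: inner_sum_left)
    also have "\<dots> = (\<Sum>A<?n. if A = B then inner w (v A) else 0)" by (rule sum.cong) auto
    also have "\<dots> = inner w (v B)" using B(1) by (simp add: sum.delta)
    finally show ?thesis unfolding orthogonal_def r_def B(2) by (simp add: inner_diff_left)
  qed
  have "orthogonal r r" using orthogonal_to_span[OF wS orth] .
  then have "r = 0" by (simp add: orthogonal_def)
  then show ?thesis unfolding r_def by simp
qed

lemma orthonormal_parseval:
  fixes v :: "nat \<Rightarrow> real^'m::finite"
  assumes on: "\<And>A B. A < CARD('m) \<Longrightarrow> B < CARD('m) \<Longrightarrow> inner (v A) (v B) = (if A = B then 1 else 0)"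
  shows "inner w w' = (\<Sum>A<CARD('m). inner w (v A) * inner w' (v A))"
proof -
  have "inner w w' = inner w (\<Sum>A<CARD('m). inner w' (v A) *\<^sub>R v A)"
    using orthonormal_expand[OF on, of w'] by simp
  then show ?thesis by (simp add: inner_sum_right mult.commute)
qed

lemma ginner_df:
  fixes f :: "real^'n::finite \<Rightarrow> 'm::real_inner"
  assumes "f differentiable (at q)"
  shows "ginner f q X Y = inner (frechet_derivative f (at q) X) (frechet_derivative f (at q) Y)"
  unfolding ginner_def metric_def fd_expand[OF assms]
  by (simp add: inner_sum_left inner_sum_right sum_distrib_left sum_distrib_right algebra_simps) (rule sum.swap)



lemma dird_const_on:
  assumes "open U" "p \<in> U" "\<And>q. q \<in> U \<Longrightarrow> h q = c"
  shows "dird h X p = 0"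
proof -
  have "dird h X p = dird (\<lambda>q. c) X p" by (rule dird_local[OF assms(1,2)]) (rule assms(3))
  also have "\<dots> = 0" by (simp add: dird_hasd[OF has_derivative_const])
  finally show ?thesis .
qed

lemma dird_linear_fd:
  fixes F :: "real^'n::finite \<Rightarrow> 'b::real_normed_vector"
  assumes "F differentiable (at p)"
  shows "dird F (\<lambda>q. \<Sum>m\<in>S. c m *\<^sub>R Y m q) p = (\<Sum>m\<in>S. c m *\<^sub>R dird F (Y m) p)"
proof -
  have l: "linear (frechet_derivative F (at p))" using linear_frechet_derivative[OF assms] .
  show ?thesis unfolding dird_def linear_sum[OF l] linear_scale[OF l] ..
qed

locale geo =
  fixes f N :: "real^3 \<Rightarrow> real^5"
    and lam :: "real^3 \<Rightarrow> real"
    and e1 e2 e3 :: "real^3 \<Rightarrow> real^3"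
    and U :: "(real^3) set"
  assumes U: "open U"
    and sf: "smooth_on f U"
    and fn: "\<forall>p\<in>U. norm (f p) = 1"
    and finj: "\<forall>p\<in>U. inj (frechet_derivative f (at p))"
    and sN: "smooth_on N U"
    and Np: "\<forall>p\<in>U. norm (N p) = 1 \<and> inner (N p) (f p) = 0
            \<and> (\<forall>X. inner (N p) (frechet_derivative f (at p) X) = 0)"
    and slam: "smooth_on lam U" and lampos: "\<forall>p\<in>U. lam p > 0"
    and se1: "smooth_on e1 U" and se2: "smooth_on e2 U" and se3: "smooth_on e3 U"
    and orth: "\<forall>p\<in>U. ginner f p (e1 p) (e1 p) = 1 \<and> ginner f p (e2 p) (e2 p) = 1
            \<and> ginner f p (e3 p) (e3 p) = 1 \<and> ginner f p (e1 p) (e2 p) = 0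
            \<and> ginner f p (e1 p) (e3 p) = 0 \<and> ginner f p (e2 p) (e3 p) = 0"
    and shape: "\<forall>p\<in>U. dird N e1 p = - (lam p *\<^sub>R dird f e1 p)
            \<and> dird N e2 p = 0
            \<and> dird N e3 p = lam p *\<^sub>R dird f e3 p"
begin

definition e :: "nat \<Rightarrow> real^3 \<Rightarrow> real^3" where
  "e k = (if k = 1 then e1 else if k = 2 then e2 else e3)"
definition E :: "nat \<Rightarrow> real^3 \<Rightarrow> real^5" where "E k = dird f (e k)"
definition F :: "nat \<Rightarrow> real^3 \<Rightarrow> real^5" where
  "F A = (if A = 0 then f else if A = 4 then N else E A)"
definition lk :: "nat \<Rightarrow> real^3 \<Rightarrow> real" where
  "lk k q = (if k = 1 then lam q else if k = 2 then 0 else - lam q)"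
definition th :: "nat \<Rightarrow> nat \<Rightarrow> nat \<Rightarrow> real^3 \<Rightarrow> real" where
  "th A B k q = inner (dird (F A) (e k) q) (F B q)"

lemma e_simps[simp]: "e 1 = e1" "e (Suc 0) = e1" "e 2 = e2" "e 3 = e3" by (simp_all add: e_def)

lemma se: "smooth_on (e k) U" using se1 se2 se3 by (simp add: e_def)
lemma sE: "smooth_on (E k) U" unfolding E_def using smooth_dird[OF U sf se] .
lemma sF: "smooth_on (F A) U" unfolding F_def using sf sN sE by simp
lemma Fk: "k \<in> {1,2,3} \<Longrightarrow> F k = dird f (e k)" by (auto simp: F_def E_def)
lemma F0: "F 0 = f" and F4: "F 4 = N" by (simp_all add: F_def)

lemma fdiff: "q \<in> U \<Longrightarrow> f differentiable (at q)" using smooth_diff_at[OF sf U] .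
lemma Fdiff: "q \<in> U \<Longrightarrow> F A differentiable (at q)" using smooth_diff_at[OF sF U] .
lemma dFdiff: "q \<in> U \<Longrightarrow> dird (F A) (e k) differentiable (at q)"
  using smooth_diff_at[OF smooth_dird[OF U sF se] U] .
lemma sth: "smooth_on (th A B k) U"
  unfolding th_def by (intro smooth_inner U smooth_dird sF se)

lemma tangent_f:
  assumes q: "q \<in> U"
  shows "inner (frechet_derivative f (at q) w) (f q) = 0"
proof -
  have "dird (\<lambda>q. inner (f q) (f q)) (\<lambda>_. w) q = 0"
    by (rule dird_const_on[OF U q, of _ 1]) (use fn in \<open>auto simp: norm_eq_1\<close>)
  moreover have "dird (\<lambda>q. inner (f q) (f q)) (\<lambda>_. w) q
      = inner (f q) (dird f (\<lambda>_. w) q) + inner (dird f (\<lambda>_. w) q) (f q)"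
    using dird_bilinear[OF bounded_bilinear_inner fdiff[OF q] fdiff[OF q]] .
  ultimately show ?thesis by (simp add: dird_def inner_commute)
qed

lemma on:
  assumes q: "q \<in> U" and A: "A < 5" and B: "B < 5"
  shows "inner (F A q) (F B q) = (if A = B then 1 else 0)"
proof -
  have ff: "inner (f q) (f q) = 1" using fn q by (simp add: norm_eq_1)
  have Ef: "inner (E a q) (f q) = 0" for a unfolding E_def dird_def using tangent_f[OF q] .
  have NE: "inner (N q) (E a q) = 0" for a unfolding E_def dird_def using Np q by blast
  have Nf: "inner (N q) (f q) = 0" and NN: "inner (N q) (N q) = 1" using Np q by (auto simp: norm_eq_1)
  have EE: "inner (E a q) (E b q) = ginner f q (e a q) (e b q)" for a b
    unfolding E_def dird_def using ginner_df[OF fdiff[OF q]] by simp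
  have gsym: "ginner f q X Y = ginner f q Y X" for X Y
    using ginner_df[OF fdiff[OF q]] by (simp add: inner_commute)
  have o: "ginner f q (e1 q) (e1 q) = 1" "ginner f q (e2 q) (e2 q) = 1"
            "ginner f q (e3 q) (e3 q) = 1" "ginner f q (e1 q) (e2 q) = 0"
            "ginner f q (e1 q) (e3 q) = 0" "ginner f q (e2 q) (e3 q) = 0"
    using orth q by auto
  have o2: "ginner f q (e2 q) (e1 q) = 0" "ginner f q (e3 q) (e1 q) = 0" "ginner f q (e3 q) (e2 q) = 0"
    using o gsym by metis+
  have A5: "A = 0 \<or> A = 1 \<or> A = 2 \<or> A = 3 \<or> A = 4" using A by auto
  have B5: "B = 0 \<or> B = 1 \<or> B = 2 \<or> B = 3 \<or> B = 4" using B by auto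
  show ?thesis
    using A5 B5 ff Ef NE Nf NN EE o o2
    by (auto simp: F_def inner_commute)
qed

lemma parseval_expand:
  assumes q: "q \<in> U"
  shows "w = (\<Sum>A<5. inner w (F A q) *\<^sub>R F A q)"
  using orthonormal_expand[of "\<lambda>A. F A q" w] on[OF q] by simp

lemma parseval:
  assumes q: "q \<in> U"
  shows "inner w w' = (\<Sum>A<5. inner w (F A q) * inner w' (F A q))"
  using orthonormal_parseval[of "\<lambda>A. F A q" w w'] on[OF q] by simp

lemma tangent_expand:
  assumes q: "q \<in> U"
  shows "w = (\<Sum>a\<in>{1,2,3}. ginner f q w (e a q) *\<^sub>R e a q)"
proof -
  let ?D = "frechet_derivative f (at q)"
  have lin: "linear ?D" using linear_frechet_derivative[OF fdiff[OF q]] .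
  have c0: "inner (?D w) (F 0 q) = 0" using tangent_f[OF q] by (simp add: F_def)
  have c4: "inner (?D w) (F 4 q) = 0" using Np q by (simp add: F_def inner_commute)
  have "?D w = (\<Sum>A<5. inner (?D w) (F A q) *\<^sub>R F A q)" using parseval_expand[OF q] .
  also have "\<dots> = (\<Sum>a\<in>{1,2,3}. inner (?D w) (F a q) *\<^sub>R F a q)"
    using c0 c4 by (simp add: eval_nat_numeral)
  also have "\<dots> = (\<Sum>a\<in>{1,2,3}. ginner f q w (e a q) *\<^sub>R ?D (e a q))"
    using ginner_df[OF fdiff[OF q]] Fk by (simp add: dird_def)
  also have "\<dots> = ?D (\<Sum>a\<in>{1,2,3}. ginner f q w (e a q) *\<^sub>R e a q)"
    unfolding linear_sum[OF lin] linear_scale[OF lin] ..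
  finally show ?thesis using finj q by (auto dest: injD)
qed

lemma th_antisym:
  assumes q: "q \<in> U" and A: "A < 5" and B: "B < 5"
  shows "th A B k q = - th B A k q"
proof -
  have "dird (\<lambda>q. inner (F A q) (F B q)) (e k) q = 0"
    by (rule dird_const_on[OF U q, of _ "if A = B then 1 else 0"]) (use on A B in auto)
  moreover have "dird (\<lambda>q. inner (F A q) (F B q)) (e k) q
      = inner (F A q) (dird (F B) (e k) q) + inner (dird (F A) (e k) q) (F B q)"
    using dird_bilinear[OF bounded_bilinear_inner Fdiff[OF q] Fdiff[OF q]] .
  ultimately show ?thesis unfolding th_def by (simp add: inner_commute)
qed

lemma th_self: "q \<in> U \<Longrightarrow> A < 5 \<Longrightarrow> th A A k q = 0"
  using th_antisym[of q A A k] by simp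

lemma th0:
  assumes q: "q \<in> U" and B: "B < 5" and k: "k \<in> {1,2,3}"
  shows "th 0 B k q = (if k = B then 1 else 0)"
proof -
  have "th 0 B k q = inner (F k q) (F B q)" unfolding th_def F0 using Fk[OF k] by simp
  also have "\<dots> = (if k = B then 1 else 0)" using on[OF q _ B, of k] k by auto
  finally show ?thesis .
qed

lemma dN: "q \<in> U \<Longrightarrow> k \<in> {1,2,3} \<Longrightarrow> dird N (e k) q = - (lk k q *\<^sub>R F k q)"
  using shape Fk by (auto simp: lk_def)

lemma th4:
  assumes q: "q \<in> U" and B: "B < 5" and k: "k \<in> {1,2,3}"
  shows "th 4 B k q = - lk k q * (if k = B then 1 else 0)"
proof -
  have "th 4 B k q = - lk k q * inner (F k q) (F B q)" unfolding th_def F4 using dN[OF q k] by simp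
  also have "\<dots> = - lk k q * (if k = B then 1 else 0)" using on[OF q _ B, of k] k by auto
  finally show ?thesis .
qed

lemma flat:
  assumes p: "p \<in> U" and A: "A < 5" and B: "B < 5" and k: "k \<in> {1,2,3}" and l: "l \<in> {1,2,3}"
  shows "dird (th A B l) (e k) p - dird (th A B k) (e l) p
     = (\<Sum>C<5. th A C l p * th B C k p - th A C k p * th B C l p)
       + (\<Sum>m\<in>{1,2,3}. (th l m k p - th k m l p) * th A B m p)"
proof -
  define br where "br = (\<lambda>q. dird (e l) (e k) q - dird (e k) (e l) q)"
  have comm: "dird (dird (F A) (e l)) (e k) p - dird (dird (F A) (e k)) (e l) p = dird (F A) br p"
    unfolding br_def using commutator_vec[OF U p sF se se] .
  have commf: "dird (dird f (e l)) (e k) p - dird (dird f (e k)) (e l) p = dird f br p"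
    unfolding br_def using commutator_vec[OF U p sf se se] .
  have dth: "dird (th A B l') (e k') p = inner (dird (F A) (e l') p) (dird (F B) (e k') p)
        + inner (dird (dird (F A) (e l')) (e k') p) (F B p)" for k' l'
    unfolding th_def using dird_bilinear[OF bounded_bilinear_inner dFdiff[OF p] Fdiff[OF p]] .
  have P1: "inner (dird (F A) (e l) p) (dird (F B) (e k) p) = (\<Sum>C<5. th A C l p * th B C k p)"
    unfolding th_def using parseval[OF p] .
  have P2: "inner (dird (F A) (e k) p) (dird (F B) (e l) p) = (\<Sum>C<5. th A C k p * th B C l p)"
    unfolding th_def using parseval[OF p] .
  have brexp: "br p = (\<Sum>m\<in>{1,2,3}. ginner f p (br p) (e m p) *\<^sub>R e m p)"
    using tangent_expand[OF p] .
  have cm: "ginner f p (br p) (e m p) = th l m k p - th k m l p" if m: "m \<in> {1,2,3}" for m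
  proof -
    have "ginner f p (br p) (e m p) = inner (dird f br p) (F m p)"
      using ginner_df[OF fdiff[OF p]] Fk[OF m] by (simp add: dird_def)
    also have "\<dots> = inner (dird (F l) (e k) p - dird (F k) (e l) p) (F m p)"
      using commf Fk[OF k] Fk[OF l] by simp
    finally show ?thesis unfolding th_def by (simp add: inner_diff_left)
  qed
  have "dird (F A) br p = dird (F A) (\<lambda>q. \<Sum>m\<in>{1,2,3}. ginner f p (br p) (e m p) *\<^sub>R e m q) p"
    unfolding dird_def using brexp by simp
  also have "\<dots> = (\<Sum>m\<in>{1,2,3}. ginner f p (br p) (e m p) *\<^sub>R dird (F A) (e m) p)"
    using dird_linear_fd[OF Fdiff[OF p]] .
  finally have "inner (dird (F A) br p) (F B p) = (\<Sum>m\<in>{1,2,3}. ginner f p (br p) (e m p) * th A B m p)"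
    unfolding th_def inner_sum_left inner_scaleR_left by (simp add: inner_add_left)
  also have "\<dots> = (\<Sum>m\<in>{1,2,3}. (th l m k p - th k m l p) * th A B m p)"
    by (rule sum.cong) (use cm in auto)
  finally have brA: "inner (dird (F A) br p) (F B p) = (\<Sum>m\<in>{1,2,3}. (th l m k p - th k m l p) * th A B m p)" .
  have "dird (th A B l) (e k) p - dird (th A B k) (e l) p
      = inner (dird (dird (F A) (e l)) (e k) p - dird (dird (F A) (e k)) (e l) p) (F B p)
        + (inner (dird (F A) (e l) p) (dird (F B) (e k) p) - inner (dird (F A) (e k) p) (dird (F B) (e l) p))"
    unfolding dth by (simp add: inner_diff_left)
  also have "\<dots> = (\<Sum>m\<in>{1,2,3}. (th l m k p - th k m l p) * th A B m p)
        + (\<Sum>C<5. th A C l p * th B C k p - th A C k p * th B C l p)"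
    unfolding comm brA P1 P2 by (simp add: sum_subtractf)
  finally show ?thesis by simp
qed

end


lemma dird_eq_local:
  assumes "open U" "p \<in> U" "\<And>q. q \<in> U \<Longrightarrow> g q = h q"
  shows "dird g X p = dird h X p"
  by (rule dird_local[OF assms(1,2)]) (rule assms(3))

lemma dird_neg_local:
  fixes h :: "real^'n::finite \<Rightarrow> 'b::real_normed_vector"
  assumes "open U" "p \<in> U" "\<And>q. q \<in> U \<Longrightarrow> g q = - h q" "h differentiable (at p)"
  shows "dird g X p = - dird h X p"
proof -
  have "dird g X p = dird (\<lambda>q. - h q) X p" by (rule dird_local[OF assms(1,2)]) (rule assms(3))
  also have "\<dots> = - dird h X p"
    using dird_linear[OF bounded_linear_minus[OF bounded_linear_ident] assms(4)] by simp
  finally show ?thesis .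
qed

lemma lessThan5: "{..<5::nat} = {0,1,2,3,4}" by auto

context geo begin

lemma th_anti_ord: "q \<in> U \<Longrightarrow> A < B \<Longrightarrow> B \<le> 3 \<Longrightarrow> th B A k q = - th A B k q"
  using th_antisym[of q B A k] by simp

lemma th_x4: "q \<in> U \<Longrightarrow> B < 4 \<Longrightarrow> k \<in> {1,2,3} \<Longrightarrow> th B 4 k q = lk k q * (if k = B then 1 else 0)"
  using th_antisym[of q B 4 k] th4[of q B k] by simp

lemma thdiff: "q \<in> U \<Longrightarrow> th A B k differentiable (at q)"
  using smooth_diff_at[OF sth U] .

lemma lamdiff: "q \<in> U \<Longrightarrow> lam differentiable (at q)"
  using smooth_diff_at[OF slam U] .

lemma dth4:
  assumes q: "q \<in> U" and j: "j < 5" and l: "l \<in> {1,2,3}"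
  shows "dird (th 4 j l) X q = (if l = j then (if l = 1 then - dird lam X q else if l = 2 then 0 else dird lam X q) else 0)"
proof (cases "l = j")
  case False
  then show ?thesis
    using dird_const_on[OF U q, of "th 4 j l" 0 X] th4[OF _ j l] by simp
next
  case True
  show ?thesis
  proof (cases "l = 1")
    case True
    then show ?thesis using \<open>l = j\<close>
      using dird_neg_local[OF U q, of "th 4 j l" lam X] th4[OF _ j l] lamdiff[OF q] by (simp add: lk_def)
  next
    case False
    show ?thesis
    proof (cases "l = 2")
      case True
      then show ?thesis using \<open>l = j\<close>
        using dird_const_on[OF U q, of "th 4 j l" 0 X] th4[OF _ j l] by (simp add: lk_def)
    next
      case False
      then have "l = 3" using l \<open>l \<noteq> 1\<close> by auto
      then show ?thesis using \<open>l = j\<close>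
        using dird_eq_local[OF U q, of "th 4 j l" lam X] th4[OF _ j l] by (simp add: lk_def)
    qed
  qed
qed

lemmas tabs = th0 th4 th_anti_ord th_x4 th_self

lemma codazzi:
  assumes q: "q \<in> U"
  shows "th 1 2 2 q = 0" "th 2 3 2 q = 0"
    "th 1 2 1 q * lam q = dird lam e2 q" "th 2 3 3 q * lam q = - dird lam e2 q"
    "th 2 3 1 q = th 1 2 3 q" "2 * th 1 3 2 q = th 1 2 3 q"
proof -
  have lp: "lam q > 0" using lampos q by auto
  show "th 1 2 2 q = 0"
    using flat[OF q, of 4 2 1 2, simplified] lp by (simp add: dth4[OF q] tabs[OF q] lessThan5 lk_def)
  show "th 2 3 2 q = 0"
    using flat[OF q, of 4 2 3 2, simplified] lp by (simp add: dth4[OF q] tabs[OF q] lessThan5 lk_def)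
  show "th 1 2 1 q * lam q = dird lam e2 q"
    using flat[OF q, of 4 1 2 1, simplified] lp by (simp add: dth4[OF q] tabs[OF q] lessThan5 lk_def)
  show "th 2 3 3 q * lam q = - dird lam e2 q"
    using flat[OF q, of 4 3 2 3, simplified] lp by (simp add: dth4[OF q] tabs[OF q] lessThan5 lk_def)
  have f6: "2 * th 1 3 2 q = th 1 2 3 q"
    using flat[OF q, of 4 1 2 3, simplified] lp by (simp add: dth4[OF q] tabs[OF q] lessThan5 lk_def)
  have "th 2 3 1 q = 2 * th 1 3 2 q"
    using flat[OF q, of 4 3 1 2, simplified] lp by (simp add: dth4[OF q] tabs[OF q] lessThan5 lk_def)
  then show "th 2 3 1 q = th 1 2 3 q" using f6 by simp
  show "2 * th 1 3 2 q = th 1 2 3 q" using f6 .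
qed

lemma codazzi_vals:
  assumes q: "q \<in> U"
  shows "th 1 2 2 q = 0" "th 2 3 2 q = 0" "th 2 3 3 q = - th 1 2 1 q"
    "th 2 3 1 q = th 1 2 3 q" "th 1 3 2 q = th 1 2 3 q / 2"
proof -
  have lp: "lam q > 0" using lampos q by auto
  show "th 1 2 2 q = 0" "th 2 3 2 q = 0" "th 2 3 1 q = th 1 2 3 q" "th 1 3 2 q = th 1 2 3 q / 2"
    using codazzi[OF q] by auto
  have "(th 2 3 3 q + th 1 2 1 q) * lam q = 0" using codazzi(3,4)[OF q] by (simp add: algebra_simps)
  then have "th 2 3 3 q + th 1 2 1 q = 0" using lp by simp
  then show "th 2 3 3 q = - th 1 2 1 q" by linarith
qed

lemmas cvals = codazzi_vals codazzi_vals[unfolded One_nat_def]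

lemma dth_rules:
  assumes q: "q \<in> U"
  shows "dird (th 1 2 2) X q = 0"
    "dird (th 3 2 3) X q = dird (th 1 2 1) X q"
    "dird (th 3 2 1) X q = - dird (th 1 2 3) X q"
    "dird (th 2 1 3) X q = - dird (th 1 2 3) X q"
    "dird (th 2 1 1) X q = - dird (th 1 2 1) X q"
proof -
  show "dird (th 1 2 2) X q = 0"
    using dird_const_on[OF U q, of "th 1 2 2" 0 X] codazzi_vals by blast
  show "dird (th 3 2 3) X q = dird (th 1 2 1) X q"
    by (rule dird_eq_local[OF U q]) (use codazzi_vals th_anti_ord in simp)
  show "dird (th 3 2 1) X q = - dird (th 1 2 3) X q"
    by (rule dird_neg_local[OF U q _ thdiff[OF q]]) (use codazzi_vals th_anti_ord in simp)
  show "dird (th 2 1 3) X q = - dird (th 1 2 3) X q"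
    by (rule dird_neg_local[OF U q _ thdiff[OF q]]) (use th_anti_ord in simp)
  show "dird (th 2 1 1) X q = - dird (th 1 2 1) X q"
    by (rule dird_neg_local[OF U q _ thdiff[OF q]]) (use th_anti_ord in simp)
qed

lemmas drules = dth_rules dth_rules[unfolded One_nat_def]

lemma gauss:
  assumes q: "q \<in> U"
  shows "dird (th 1 2 3) e2 q = 2 * th 1 2 1 q * th 1 2 3 q"
    "dird (th 1 2 1) e2 q = 1 + (th 1 2 1 q)\<^sup>2 - (th 1 2 3 q)\<^sup>2"
    "dird (th 1 2 1) e1 q + dird (th 1 2 3) e3 q = 0"
    "dird (th 1 2 1) e3 q = dird (th 1 2 3) e1 q"
proof -
  show "dird (th 1 2 3) e2 q = 2 * th 1 2 1 q * th 1 2 3 q"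
    using flat[OF q, of 1 2 2 3, simplified] by (simp add: drules[OF q] cvals[OF q] tabs[OF q] lessThan5 lk_def)
  show "dird (th 1 2 1) e2 q = 1 + (th 1 2 1 q)\<^sup>2 - (th 1 2 3 q)\<^sup>2"
    using flat[OF q, of 1 2 2 1, simplified] by (simp add: drules[OF q] cvals[OF q] tabs[OF q] lessThan5 lk_def power2_eq_square)
  show "dird (th 1 2 1) e1 q + dird (th 1 2 3) e3 q = 0"
    using flat[OF q, of 3 2 1 3, simplified] by (simp add: drules[OF q] cvals[OF q] tabs[OF q] lessThan5 lk_def)
  show "dird (th 1 2 1) e3 q = dird (th 1 2 3) e1 q"
    using flat[OF q, of 2 1 1 3, simplified] by (simp add: drules[OF q] cvals[OF q] tabs[OF q] lessThan5 lk_def)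
qed

end


lemma metric_entry: "metric f q $ i $ j = inner (pd i f q) (pd j f q)"
  by (simp add: metric_def)

lemma matmul_entry: "((A::real^'n::finite^'n) ** B) $ i $ j = (\<Sum>k\<in>UNIV. A $ i $ k * B $ k $ j)"
  by (simp add: matrix_matrix_mult_def)

lemma mat1_entry: "(mat 1 :: real^'n::finite^'n) $ i $ j = (if i = j then 1 else 0)"
  by (simp add: mat_def)

lemma pd_metric:
  fixes f :: "real^'n::finite \<Rightarrow> 'm::real_inner"
  assumes "pd j f differentiable (at q)" "pd l f differentiable (at q)"
  shows "pd i (\<lambda>q. metric f q $ j $ l) q = inner (pd j f q) (pd i (pd l f) q) + inner (pd i (pd j f) q) (pd l f q)"
  unfolding metric_entry using pd_bilinear[OF bounded_bilinear_inner assms] .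

lemma christoffel_lower:
  fixes f :: "real^'n::finite \<Rightarrow> real^'m::finite"
  assumes U: "open U" and q: "q \<in> U" and sf: "smooth_on f U"
    and Qinv: "metric f q ** Q = mat 1" and Qdef: "matrix_inv (metric f q) = Q"
  shows "(\<Sum>k\<in>UNIV. metric f q $ l $ k * christoffel f k i j q) = inner (pd i (pd j f) q) (pd l f q)"
proof -
  have pdd: "\<And>a. pd a f differentiable (at q)" using smooth_diff_at[OF smooth_pd[OF sf] U q] .
  have sym: "\<And>a b. pd a (pd b f) q = pd b (pd a f) q"
    using schwarz_vec[OF U smooth_Ck[OF sf] q] by blast
  define S where "S m = pd i (\<lambda>q. metric f q $ j $ m) q + pd j (\<lambda>q. metric f q $ i $ m) q
       - pd m (\<lambda>q. metric f q $ i $ j) q" for m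
  have S: "S m = 2 * inner (pd i (pd j f) q) (pd m f q)" for m
    unfolding S_def pd_metric[OF pdd pdd] using sym[of i j] sym[of m j] sym[of m i]
    by (simp add: inner_commute)
  have "(\<Sum>k\<in>UNIV. metric f q $ l $ k * christoffel f k i j q)
      = (\<Sum>k\<in>UNIV. metric f q $ l $ k * ((1/2) * (\<Sum>m\<in>UNIV. Q $ k $ m * S m)))"
    unfolding christoffel_def Qdef S_def by simp
  also have "\<dots> = (1/2) * (\<Sum>m\<in>UNIV. (\<Sum>k\<in>UNIV. metric f q $ l $ k * Q $ k $ m) * S m)"
    by (simp add: sum_distrib_left sum_distrib_right algebra_simps) (rule sum.swap)
  also have "\<dots> = (1/2) * (\<Sum>m\<in>UNIV. (if l = m then 1 else 0) * S m)"
    using Qinv by (simp add: matmul_entry[symmetric] mat1_entry)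
  also have "\<dots> = (1/2) * S l"
  proof -
    have "(\<Sum>m\<in>UNIV. (if l = m then 1 else 0) * S m) = (\<Sum>m\<in>UNIV. if l = m then S m else 0)"
      by (rule sum.cong) auto
    then show ?thesis by simp
  qed
  also have "\<dots> = inner (pd i (pd j f) q) (pd l f q)" using S by simp
  finally show ?thesis .
qed

lemma sum_swap3: "(\<Sum>k\<in>A. \<Sum>i\<in>B. \<Sum>j\<in>C. g k i j) = (\<Sum>i\<in>B. \<Sum>j\<in>C. \<Sum>k\<in>A. g k i j)"
proof -
  have "(\<Sum>k\<in>A. \<Sum>i\<in>B. \<Sum>j\<in>C. g k i j) = (\<Sum>i\<in>B. \<Sum>k\<in>A. \<Sum>j\<in>C. g k i j)" by (rule sum.swap)
  also have "\<dots> = (\<Sum>i\<in>B. \<Sum>j\<in>C. \<Sum>k\<in>A. g k i j)" by (rule sum.cong[OF refl]) (rule sum.swap)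
  finally show ?thesis .
qed

lemma ginner_covd:
  fixes f :: "real^'n::finite \<Rightarrow> real^'m::finite" and X Y :: "real^'n \<Rightarrow> real^'n"
  assumes U: "open U" and q: "q \<in> U" and sf: "smooth_on f U" and sX: "smooth_on X U" and sY: "smooth_on Y U"
    and Qinv: "metric f q ** Q = mat 1" and Qdef: "matrix_inv (metric f q) = Q"
  shows "ginner f q (covd f X Y q) W = inner (dird (dird f Y) X q) (frechet_derivative f (at q) W)"
proof -
  have fd: "f differentiable (at q)" using smooth_diff_at[OF sf U q] .
  have Yd: "Y differentiable (at q)" using smooth_diff_at[OF sY U q] .
  define fW where "fW = frechet_derivative f (at q) W"
  have fW: "fW = (\<Sum>l\<in>UNIV. W $ l *\<^sub>R pd l f q)" unfolding fW_def using fd_expand[OF fd] .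
  have A: "inner (pd k f q) fW = (\<Sum>l\<in>UNIV. W $ l * metric f q $ l $ k)" for k
    unfolding fW by (simp add: inner_sum_right metric_entry inner_commute)
  have B: "(\<Sum>k\<in>UNIV. christoffel f k i j q * inner (pd k f q) fW) = inner (pd i (pd j f) q) fW" for i j
  proof -
    have "(\<Sum>k\<in>UNIV. christoffel f k i j q * inner (pd k f q) fW)
        = (\<Sum>k\<in>UNIV. \<Sum>l\<in>UNIV. W $ l * (metric f q $ l $ k * christoffel f k i j q))"
      unfolding A by (simp add: sum_distrib_left algebra_simps)
    also have "\<dots> = (\<Sum>l\<in>UNIV. W $ l * (\<Sum>k\<in>UNIV. metric f q $ l $ k * christoffel f k i j q))"
      by (subst sum.swap) (simp add: sum_distrib_left)
    also have "\<dots> = (\<Sum>l\<in>UNIV. W $ l * inner (pd i (pd j f) q) (pd l f q))"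
      using christoffel_lower[OF U q sf Qinv Qdef] by simp
    also have "\<dots> = inner (pd i (pd j f) q) fW"
      unfolding fW by (simp add: inner_sum_right)
    finally show ?thesis .
  qed
  have "ginner f q (covd f X Y q) W = (\<Sum>k\<in>UNIV. covd f X Y q $ k * inner (pd k f q) fW)"
    unfolding ginner_df[OF fd] fd_expand[OF fd, of "covd f X Y q"] fW_def[symmetric]
    by (simp add: inner_sum_left)
  also have "\<dots> = (\<Sum>k\<in>UNIV. (dird Y X q $ k + (\<Sum>i\<in>UNIV. \<Sum>j\<in>UNIV. christoffel f k i j q * X q $ i * Y q $ j)) * inner (pd k f q) fW)"
    unfolding covd_def using dird_component[OF Yd] by simp
  also have "\<dots> = (\<Sum>k\<in>UNIV. dird Y X q $ k * inner (pd k f q) fW)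
      + (\<Sum>k\<in>UNIV. \<Sum>i\<in>UNIV. \<Sum>j\<in>UNIV. (X q $ i * Y q $ j) * (christoffel f k i j q * inner (pd k f q) fW))"
  proof -
    have Sk: "(\<Sum>i\<in>UNIV. \<Sum>j\<in>UNIV. christoffel f k i j q * X q $ i * Y q $ j) * inner (pd k f q) fW
        = (\<Sum>i\<in>UNIV. \<Sum>j\<in>UNIV. (X q $ i * Y q $ j) * (christoffel f k i j q * inner (pd k f q) fW))" for k
      unfolding sum_distrib_right by (intro sum.cong refl) (simp add: mult_ac)
    show ?thesis unfolding distrib_right sum.distrib Sk ..
  qed
  also have "\<dots> = (\<Sum>k\<in>UNIV. dird Y X q $ k * inner (pd k f q) fW)
      + (\<Sum>i\<in>UNIV. \<Sum>j\<in>UNIV. (X q $ i * Y q $ j) * inner (pd i (pd j f) q) fW)"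
    unfolding sum_swap3 sum_distrib_left[symmetric] B ..
  also have "\<dots> = inner (dird (dird f Y) X q) fW"
  proof -
    have "(\<Sum>i\<in>UNIV. \<Sum>j\<in>UNIV. (X q $ i * Y q $ j) * inner (pd i (pd j f) q) fW)
        = (\<Sum>k\<in>UNIV. \<Sum>j\<in>UNIV. (Y q $ k * X q $ j) * inner (pd j (pd k f) q) fW)"
      by (subst sum.swap) (simp add: mult.commute)
    then show ?thesis
      unfolding dird_dird_expand[OF U q sf sX sY] inner_add_left inner_sum_left inner_scaleR_left
      by (simp only:)
  qed
  finally show ?thesis unfolding fW_def .
qed



lemma axis_nth': "axis j (1::real) $ i = (if i = j then 1 else 0)"
  by (simp add: axis_def)

lemma ginner_axis: "ginner f q (axis j 1) Y = (\<Sum>k\<in>UNIV. metric f q $ j $ k * Y $ k)"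
proof -
  have "ginner f q (axis j 1) Y = (\<Sum>i\<in>UNIV. if i = j then (\<Sum>k\<in>UNIV. metric f q $ i $ k * Y $ k) else 0)"
    unfolding ginner_def axis_nth' by (intro sum.cong refl) auto
  then show ?thesis by simp
qed

lemma matrix_inv_unique:
  fixes g Q :: "real^'n::finite^'n"
  assumes "g ** Q = mat 1"
  shows "matrix_inv g = Q"
proof -
  have QL: "Q ** g = mat 1" using assms matrix_left_right_inverse by blast
  show ?thesis unfolding matrix_inv_def
  proof (rule some_equality)
    show "g ** Q = mat 1 \<and> Q ** g = mat 1" using assms QL by blast
  next
    fix A assume A: "g ** A = mat 1 \<and> A ** g = mat 1"
    have "A = A ** (g ** Q)" using assms by (simp add: matrix_mul_rid)
    also have "\<dots> = (A ** g) ** Q" by (simp add: matrix_mul_assoc)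
    also have "\<dots> = Q" using A by (simp add: matrix_mul_lid)
    finally show "A = Q" .
  qed
qed

context geo begin

definition Qm :: "real^3 \<Rightarrow> real^3^3" where
  "Qm q = (\<chi> k l. \<Sum>a\<in>{1,2,3}. e a q $ k * e a q $ l)"

lemma Qm_entry: "Qm q $ k $ l = (\<Sum>a\<in>{1,2,3}. e a q $ k * e a q $ l)"
  by (simp add: Qm_def)

lemma Qm_sym: "Qm q $ k $ l = Qm q $ l $ k"
  unfolding Qm_entry by (simp add: mult.commute)

lemma metric_Q:
  assumes q: "q \<in> U"
  shows "metric f q ** Qm q = mat 1"
proof -
  have "(metric f q ** Qm q) $ j $ l = mat 1 $ j $ l" for j l
  proof -
    have "(metric f q ** Qm q) $ j $ l = (\<Sum>a\<in>{1,2,3}. (\<Sum>k\<in>UNIV. metric f q $ j $ k * e a q $ k) * e a q $ l)"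
      unfolding matmul_entry Qm_entry
      by (simp add: distrib_left sum.distrib sum_distrib_right mult.assoc)
    also have "\<dots> = (\<Sum>a\<in>{1,2,3}. ginner f q (axis j 1) (e a q) * e a q $ l)"
      unfolding ginner_axis ..
    also have "\<dots> = (\<Sum>a\<in>{1,2,3}. ginner f q (axis j 1) (e a q) *\<^sub>R e a q) $ l"
      by simp
    also have "\<dots> = axis j 1 $ l" using tangent_expand[OF q, of "axis j 1"] by simp
    also have "\<dots> = mat 1 $ j $ l" by (simp add: axis_nth' mat1_entry)
    finally show ?thesis .
  qed
  then show ?thesis by (simp add: vec_eq_iff)
qed

lemma minv_Q: "q \<in> U \<Longrightarrow> matrix_inv (metric f q) = Qm q"
  using matrix_inv_unique metric_Q by blast

lemma u_th:
  assumes q: "q \<in> U"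
  shows "ginner f q (covd f e3 e1 q) (e2 q) = th 1 2 3 q"
  using ginner_covd[OF U q sf se3 se1 metric_Q[OF q] minv_Q[OF q], of "e2 q"] Fk[of 1] Fk[of 2]
  by (simp add: th_def dird_def)

end


lemma pd_diff:
  assumes "h differentiable (at p)" "g differentiable (at p)"
  shows "pd i (\<lambda>q. h q - g q) p = pd i h p - pd i g p"
  using pd_hasd[OF has_derivative_diff[OF fd_works[OF assms(1)] fd_works[OF assms(2)]], of i] by (simp add: pd_def)

lemma pd_mult:
  fixes h g :: "real^'n::finite \<Rightarrow> real"
  assumes "h differentiable (at p)" "g differentiable (at p)"
  shows "pd i (\<lambda>q. h q * g q) p = h p * pd i g p + pd i h p * g p"
  using pd_bilinear[OF bounded_bilinear_mult assms] .

definition adj3 :: "real^3^3 \<Rightarrow> real^3^3" where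
  "adj3 A = (\<chi> i j. if i = 1 \<and> j = 1 then A$2$2 * A$3$3 - A$2$3 * A$3$2
    else if i = 1 \<and> j = 2 then A$1$3 * A$3$2 - A$1$2 * A$3$3
    else if i = 1 \<and> j = 3 then A$1$2 * A$2$3 - A$1$3 * A$2$2
    else if i = 2 \<and> j = 1 then A$2$3 * A$3$1 - A$2$1 * A$3$3
    else if i = 2 \<and> j = 2 then A$1$1 * A$3$3 - A$1$3 * A$3$1
    else if i = 2 \<and> j = 3 then A$1$3 * A$2$1 - A$1$1 * A$2$3
    else if i = 3 \<and> j = 1 then A$2$1 * A$3$2 - A$2$2 * A$3$1
    else if i = 3 \<and> j = 2 then A$1$2 * A$3$1 - A$1$1 * A$3$2
    else A$1$1 * A$2$2 - A$1$2 * A$2$1)"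

lemma three_neq: "(1::3) \<noteq> 2" "(1::3) \<noteq> 3" "(2::3) \<noteq> 3" "(2::3) \<noteq> 1" "(3::3) \<noteq> 1" "(3::3) \<noteq> 2"
  by simp_all

lemma adj3_mult: "adj3 A ** A = det A *\<^sub>R mat 1"
  unfolding vec_eq_iff matmul_entry forall_3 sum_3 det_3
  by (simp add: adj3_def mat_def three_neq algebra_simps)

lemma adj3_inv:
  assumes "A ** Q = mat 1"
  shows "adj3 A = det A *\<^sub>R Q"
proof -
  have "adj3 A = adj3 A ** (A ** Q)" using assms by (simp add: matrix_mul_rid)
  also have "\<dots> = (adj3 A ** A) ** Q" by (simp add: matrix_mul_assoc)
  also have "\<dots> = det A *\<^sub>R Q" unfolding adj3_mult scalar_matrix_assoc[symmetric] by (simp add: matrix_mul_lid)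
  finally show ?thesis .
qed

lemma jacobi3:
  fixes g :: "real^'n::finite \<Rightarrow> real^3^3"
  assumes diff: "\<And>k l. (\<lambda>q. g q $ k $ l) differentiable (at p)"
    and sym: "\<And>k l. pd i (\<lambda>q. g q $ k $ l) p = pd i (\<lambda>q. g q $ l $ k) p"
    and inv: "g p ** Q = mat 1"
  shows "pd i (\<lambda>q. det (g q)) p = det (g p) * (\<Sum>k\<in>UNIV. \<Sum>l\<in>UNIV. Q $ k $ l * pd i (\<lambda>q. g q $ k $ l) p)"
proof -
  have adj: "det (g p) * Q $ k $ l = adj3 (g p) $ k $ l" for k l
    using adj3_inv[OF inv] by simp
  have "det (g p) * (\<Sum>k\<in>UNIV. \<Sum>l\<in>UNIV. Q $ k $ l * pd i (\<lambda>q. g q $ k $ l) p)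
      = (\<Sum>k\<in>UNIV. \<Sum>l\<in>UNIV. adj3 (g p) $ k $ l * pd i (\<lambda>q. g q $ k $ l) p)"
    by (simp add: sum_distrib_left mult.assoc[symmetric] adj)
  moreover have "pd i (\<lambda>q. det (g q)) p = (\<Sum>k\<in>UNIV. \<Sum>l\<in>UNIV. adj3 (g p) $ k $ l * pd i (\<lambda>q. g q $ k $ l) p)"
    unfolding det_3 sum_3
    by (simp add: pd_add pd_diff pd_mult diff adj3_def three_neq sym[of 1 2] sym[of 1 3] sym[of 2 3] algebra_simps)
  ultimately show ?thesis by simp
qed

lemma sqrt_hasd:
  fixes G :: "real^'n::finite \<Rightarrow> real"
  assumes "G differentiable (at p)" "G p > 0"
  shows "((\<lambda>q. sqrt (G q)) has_derivative (\<lambda>w. inverse (sqrt (G p)) / 2 * frechet_derivative G (at p) w)) (at p)"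
  using has_derivative_compose[OF fd_works[OF assms(1)] DERIV_real_sqrt[OF assms(2), unfolded has_field_derivative_def]]
  by (simp add: mult.commute)

lemma sqrt_diff:
  fixes G :: "real^'n::finite \<Rightarrow> real"
  assumes "G differentiable (at p)" "G p > 0"
  shows "(\<lambda>q. sqrt (G q)) differentiable (at p)"
  using sqrt_hasd[OF assms] unfolding differentiable_def by blast

lemma pd_sqrt:
  fixes G :: "real^'n::finite \<Rightarrow> real"
  assumes "G differentiable (at p)" "G p > 0"
  shows "pd i (\<lambda>q. sqrt (G q)) p = pd i G p / (2 * sqrt (G p))"
  using pd_hasd[OF sqrt_hasd[OF assms], of i] assms(2) by (simp add: pd_def divide_simps mult.commute)



lemma inner_double:
  "inner (\<Sum>k\<in>K. x k *\<^sub>R A k) (\<Sum>l\<in>L. y l *\<^sub>R B l) = (\<Sum>k\<in>K. \<Sum>l\<in>L. x k * y l * inner (A k) (B l))"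
  by (simp add: inner_sum_left inner_sum_right sum_distrib_left mult.assoc) (subst sum.swap, simp add: mult_ac)

context geo begin

definition Bf :: "real^3 \<Rightarrow> real^3 \<Rightarrow> real^3 \<Rightarrow> real^5" where
  "Bf p x y = (\<Sum>j\<in>UNIV. \<Sum>k\<in>UNIV. (x $ j * y $ k) *\<^sub>R pd j (pd k f) p)"

lemma Bf_sym:
  assumes p: "p \<in> U"
  shows "Bf p x y = Bf p y x"
proof -
  have sym: "\<And>a b. pd a (pd b f) p = pd b (pd a f) p"
    using schwarz_vec[OF U smooth_Ck[OF sf] p] by blast
  have "Bf p x y = (\<Sum>k\<in>UNIV. \<Sum>j\<in>UNIV. (x $ j * y $ k) *\<^sub>R pd j (pd k f) p)"
    unfolding Bf_def by (rule sum.swap)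
  also have "\<dots> = Bf p y x" unfolding Bf_def using sym by (simp add: mult.commute)
  finally show ?thesis .
qed

lemma Bf_axis: "Bf p (axis i 1) y = (\<Sum>k\<in>UNIV. y $ k *\<^sub>R pd i (pd k f) p)"
proof -
  have "Bf p (axis i 1) y = (\<Sum>j\<in>UNIV. if j = i then (\<Sum>k\<in>UNIV. y $ k *\<^sub>R pd j (pd k f) p) else 0)"
    unfolding Bf_def axis_nth' by (intro sum.cong refl) auto
  then show ?thesis by simp
qed

lemma Bf_left: "Bf p x y = (\<Sum>i\<in>UNIV. x $ i *\<^sub>R Bf p (axis i 1) y)"
  unfolding Bf_axis unfolding Bf_def by (simp add: scaleR_sum_right)

lemma dd_f:
  assumes p: "p \<in> U" and sX: "smooth_on X U" and sY: "smooth_on Y U"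
  shows "dird (dird f Y) X p = frechet_derivative f (at p) (dird Y X p) + Bf p (X p) (Y p)"
proof -
  have "Bf p (X p) (Y p) = (\<Sum>k\<in>UNIV. \<Sum>j\<in>UNIV. (Y p $ k * X p $ j) *\<^sub>R pd j (pd k f) p)"
    unfolding Bf_def by (subst sum.swap) (simp add: mult.commute)
  then show ?thesis
    unfolding dird_dird_expand[OF U p sf sX sY] fd_expand[OF fdiff[OF p]] by simp
qed

lemma E_expand: "p \<in> U \<Longrightarrow> E a p = (\<Sum>l\<in>UNIV. e a p $ l *\<^sub>R pd l f p)"
  unfolding E_def using dird_expand[OF fdiff] by blast

definition hI :: "real^3 \<Rightarrow> 3 \<Rightarrow> real" where
  "hI p i = (\<Sum>a\<in>{1,2,3}. inner (Bf p (axis i 1) (e a p)) (E a p))"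

lemma metric_entry_diff: "p \<in> U \<Longrightarrow> (\<lambda>q. metric f q $ k $ l) differentiable (at p)"
  unfolding metric_entry
  by (rule differentiable_inner) (use smooth_diff_at[OF smooth_pd[OF sf] U] in auto)

lemma pdG:
  assumes p: "p \<in> U"
  shows "pd i (\<lambda>q. det (metric f q)) p = 2 * det (metric f p) * hI p i"
proof -
  have pdd: "\<And>a. pd a f differentiable (at p)" using smooth_diff_at[OF smooth_pd[OF sf] U p] .
  have symf: "(\<lambda>q. metric f q $ k $ l) = (\<lambda>q. metric f q $ l $ k)" for k l
    by (simp add: metric_entry inner_commute)
  have J: "pd i (\<lambda>q. det (metric f q)) p = det (metric f p) *
      (\<Sum>k\<in>UNIV. \<Sum>l\<in>UNIV. Qm p $ k $ l * pd i (\<lambda>q. metric f q $ k $ l) p)"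
    by (rule jacobi3[OF metric_entry_diff[OF p]]) (use symf metric_Q[OF p] in auto)
  define T where "T k l = inner (pd i (pd k f) p) (pd l f p)" for k l
  have pdm: "pd i (\<lambda>q. metric f q $ k $ l) p = T l k + T k l" for k l
    unfolding pd_metric[OF pdd pdd] T_def by (simp add: inner_commute)
  have s1: "(\<Sum>k\<in>UNIV. \<Sum>l\<in>UNIV. Qm p $ k $ l * T l k) = (\<Sum>k\<in>UNIV. \<Sum>l\<in>UNIV. Qm p $ k $ l * T k l)"
    by (subst sum.swap) (simp add: Qm_sym)
  have "(\<Sum>k\<in>UNIV. \<Sum>l\<in>UNIV. Qm p $ k $ l * pd i (\<lambda>q. metric f q $ k $ l) p)
      = 2 * (\<Sum>k\<in>UNIV. \<Sum>l\<in>UNIV. Qm p $ k $ l * T k l)"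
    unfolding pdm distrib_left sum.distrib s1 by simp
  also have "\<dots> = 2 * hI p i"
  proof -
    have "(\<Sum>k\<in>UNIV. \<Sum>l\<in>UNIV. Qm p $ k $ l * T k l)
        = (\<Sum>k\<in>UNIV. \<Sum>l\<in>UNIV. \<Sum>a\<in>{1,2,3}. e a p $ k * e a p $ l * T k l)"
      unfolding Qm_entry sum_distrib_right ..
    also have "\<dots> = (\<Sum>a\<in>{1,2,3}. \<Sum>k\<in>UNIV. \<Sum>l\<in>UNIV. e a p $ k * e a p $ l * T k l)"
      by (subst sum_swap3[symmetric]) simp
    also have "\<dots> = hI p i"
      unfolding hI_def Bf_axis E_expand[OF p] T_def inner_double ..
    finally show ?thesis by simp
  qed
  finally show ?thesis using J by simp
qed

lemma detpos:
  assumes p: "p \<in> U"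
  shows "det (metric f p) > 0"
proof -
  define P :: "real^3^3" where "P = (\<chi> k a. if a = 1 then e1 p $ k else if a = 2 then e2 p $ k else e3 p $ k)"
  have QP: "Qm p = P ** transpose P"
    by (simp add: vec_eq_iff matmul_entry sum_3 Qm_entry transpose_def P_def three_neq)
  have "det (metric f p) * det (Qm p) = 1"
    using metric_Q[OF p] det_mul[of "metric f p" "Qm p"] by simp
  then have "det (metric f p) * (det P * det P) = 1"
    unfolding QP det_mul det_transpose .
  moreover have "det P * det P \<ge> 0" by simp
  ultimately show ?thesis
    by (metis less_eq_real_def mult_eq_0_iff mult_le_0_iff not_one_le_zero zero_less_one)
qed

lemma ginner_lin_left:
  assumes p: "p \<in> U"
  shows "ginner f p (\<Sum>i\<in>S. c i *\<^sub>R Z i) Y = (\<Sum>i\<in>S. c i * ginner f p (Z i) Y)"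
proof -
  have l: "linear (frechet_derivative f (at p))" using linear_frechet_derivative[OF fdiff[OF p]] .
  show ?thesis unfolding ginner_df[OF fdiff[OF p]] linear_sum[OF l] linear_scale[OF l]
    by (simp add: inner_sum_left)
qed

lemma trace_id:
  assumes p: "p \<in> U" and b: "b \<in> {1,2,3}"
  shows "(\<Sum>i\<in>UNIV. pd i (\<lambda>q. e b q $ i) p) + (\<Sum>i\<in>UNIV. e b p $ i * hI p i) = (\<Sum>a\<in>{1,2,3}. th b a a p)"
proof -
  have ebd: "e b differentiable (at p)" using smooth_diff_at[OF se U p] .
  have tha: "th b a a p = ginner f p (dird (e b) (e a) p) (e a p) + inner (Bf p (e b p) (e a p)) (E a p)"
    if a: "a \<in> {1,2,3}" for a
  proof -
    have "th b a a p = inner (dird (dird f (e b)) (e a) p) (E a p)"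
      unfolding th_def using Fk[OF b] Fk[OF a] by (simp add: E_def)
    also have "\<dots> = inner (frechet_derivative f (at p) (dird (e b) (e a) p)) (E a p) + inner (Bf p (e a p) (e b p)) (E a p)"
      unfolding dd_f[OF p se se] inner_add_left ..
    finally show ?thesis
      using ginner_df[OF fdiff[OF p]] Bf_sym[OF p] by (simp add: E_def dird_def)
  qed
  have part1: "(\<Sum>a\<in>{1,2,3}. ginner f p (dird (e b) (e a) p) (e a p)) = (\<Sum>i\<in>UNIV. pd i (\<lambda>q. e b q $ i) p)"
  proof -
    have "(\<Sum>a\<in>{1,2,3}. ginner f p (dird (e b) (e a) p) (e a p))
        = (\<Sum>a\<in>{1,2,3}. \<Sum>i\<in>UNIV. e a p $ i * ginner f p (pd i (e b) p) (e a p))"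
      unfolding dird_expand[OF ebd] ginner_lin_left[OF p] ..
    also have "\<dots> = (\<Sum>i\<in>UNIV. (\<Sum>a\<in>{1,2,3}. ginner f p (pd i (e b) p) (e a p) *\<^sub>R e a p) $ i)"
      by (subst sum.swap) (simp add: mult.commute)
    also have "\<dots> = (\<Sum>i\<in>UNIV. pd i (e b) p $ i)"
      using tangent_expand[OF p] by simp
    also have "\<dots> = (\<Sum>i\<in>UNIV. pd i (\<lambda>q. e b q $ i) p)"
      using pd_component[OF ebd] by simp
    finally show ?thesis .
  qed
  have part2: "(\<Sum>a\<in>{1,2,3}. inner (Bf p (e b p) (e a p)) (E a p)) = (\<Sum>i\<in>UNIV. e b p $ i * hI p i)"
  proof -
    have "(\<Sum>a\<in>{1,2,3}. inner (Bf p (e b p) (e a p)) (E a p))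
        = (\<Sum>a\<in>{1,2,3}. \<Sum>i\<in>UNIV. e b p $ i * inner (Bf p (axis i 1) (e a p)) (E a p))"
      by (subst Bf_left) (simp add: inner_sum_left)
    also have "\<dots> = (\<Sum>i\<in>UNIV. e b p $ i * hI p i)"
      unfolding hI_def by (subst sum.swap) (simp add: sum_distrib_left distrib_left)
    finally show ?thesis .
  qed
  show ?thesis using tha part1 part2 by (simp add: sum.distrib)
qed

end


lemma pd_sum:
  assumes "\<And>a. a \<in> S \<Longrightarrow> h a differentiable (at p)"
  shows "pd i (\<lambda>q. \<Sum>a\<in>S. h a q) p = (\<Sum>a\<in>S. pd i (h a) p)"
proof -
  have "((\<lambda>q. \<Sum>a\<in>S. h a q) has_derivative (\<lambda>w. \<Sum>a\<in>S. frechet_derivative (h a) (at p) w)) (at p)"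
    using assms fd_works by (intro has_derivative_sum) blast
  from pd_hasd[OF this, of i] show ?thesis by (simp add: pd_def)
qed

lemma dird_expand_real:
  fixes h :: "real^'n::finite \<Rightarrow> real"
  assumes "h differentiable (at p)"
  shows "dird h X p = (\<Sum>i\<in>UNIV. X p $ i * pd i h p)"
  using dird_expand[OF assms] by simp

context geo begin

lemma laplace_frame:
  assumes p: "p \<in> U" and sphi: "smooth_on \<phi> U"
  shows "laplace_beltrami f \<phi> p = (\<Sum>b\<in>{1,2,3}. dird (dird \<phi> (e b)) (e b) p)
          + (\<Sum>b\<in>{1,2,3}. dird \<phi> (e b) p * (\<Sum>a\<in>{1,2,3}. th b a a p))"
proof -
  define G where "G q = det (metric f q)" for q
  define W where "W i q = (\<Sum>a\<in>{1,2,3}. e a q $ i * dird \<phi> (e a) q)" for i q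
  have md: "\<And>k l. (\<lambda>q. metric f q $ k $ l) differentiable (at p)" using metric_entry_diff[OF p] .
  have Gd: "G differentiable (at p)"
    unfolding G_def det_3 by (intro differentiable_add differentiable_diff differentiable_mult md)
  have Gp: "G p > 0" unfolding G_def using detpos[OF p] .
  have sGp: "sqrt (G p) > 0" using Gp by simp
  have sGd: "(\<lambda>q. sqrt (G q)) differentiable (at p)" using sqrt_diff[OF Gd Gp] .
  have pdsG: "pd i (\<lambda>q. sqrt (G q)) p = sqrt (G p) * hI p i" for i
  proof -
    have "pd i (\<lambda>q. sqrt (G q)) p = 2 * G p * hI p i / (2 * sqrt (G p))"
      unfolding pd_sqrt[OF Gd Gp] unfolding G_def using pdG[OF p] by simp
    also have "\<dots> = sqrt (G p) * hI p i"
    proof -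
      have e: "G p = sqrt (G p) * sqrt (G p)" using Gp by simp
      have "2 * G p * hI p i / (2 * sqrt (G p)) = (sqrt (G p) * hI p i) * (2 * sqrt (G p)) / (2 * sqrt (G p))"
        by (subst e) (simp only: mult_ac)
      then show ?thesis using sGp by simp
    qed
    finally show ?thesis .
  qed
  have sphia: "smooth_on (dird \<phi> (e a)) U" for a using smooth_dird[OF U sphi se] .
  have sW: "smooth_on (W i) U" for i
    unfolding W_def by (intro smooth_sum smooth_mult smooth_component U se sphia) auto
  have Wd: "W i differentiable (at p)" for i using smooth_diff_at[OF sW U p] .
  have Wloc: "sqrt (G q) * (\<Sum>j\<in>UNIV. matrix_inv (metric f q) $ i $ j * pd j \<phi> q) = sqrt (G q) * W i q"
    if q: "q \<in> U" for i q
  proof -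
    have "(\<Sum>j\<in>UNIV. matrix_inv (metric f q) $ i $ j * pd j \<phi> q)
        = (\<Sum>j\<in>UNIV. \<Sum>a\<in>{1,2,3}. e a q $ i * (e a q $ j * pd j \<phi> q))"
      unfolding minv_Q[OF q] Qm_entry sum_distrib_right by (simp add: mult.assoc)
    also have "\<dots> = W i q"
      unfolding W_def dird_expand_real[OF smooth_diff_at[OF sphi U q]]
      by (subst sum.swap) (simp add: sum_distrib_left)
    finally show ?thesis by simp
  qed
  have step: "pd i (\<lambda>q. sqrt (G q) * (\<Sum>j\<in>UNIV. matrix_inv (metric f q) $ i $ j * pd j \<phi> q)) p
      = sqrt (G p) * (pd i (W i) p + hI p i * W i p)" for i
  proof -
    have "pd i (\<lambda>q. sqrt (G q) * (\<Sum>j\<in>UNIV. matrix_inv (metric f q) $ i $ j * pd j \<phi> q)) p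
        = pd i (\<lambda>q. sqrt (G q) * W i q) p"
      by (rule pd_local[OF U p]) (rule Wloc)
    also have "\<dots> = sqrt (G p) * pd i (W i) p + pd i (\<lambda>q. sqrt (G q)) p * W i p"
      using pd_mult[OF sGd Wd] .
    finally show ?thesis unfolding pdsG by (simp add: algebra_simps)
  qed
  have lap: "laplace_beltrami f \<phi> p = (\<Sum>i\<in>UNIV. pd i (W i) p + hI p i * W i p)"
  proof -
    have "laplace_beltrami f \<phi> p = (1 / sqrt (G p)) * (\<Sum>i\<in>UNIV. sqrt (G p) * (pd i (W i) p + hI p i * W i p))"
      unfolding laplace_beltrami_def G_def[symmetric] step ..
    also have "\<dots> = (1 / sqrt (G p)) * (sqrt (G p) * (\<Sum>i\<in>UNIV. pd i (W i) p + hI p i * W i p))"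
      by (simp only: sum_distrib_left)
    finally show ?thesis using sGp by simp
  qed
  have pdW: "pd i (W i) p = (\<Sum>a\<in>{1,2,3}. e a p $ i * pd i (dird \<phi> (e a)) p + pd i (\<lambda>q. e a q $ i) p * dird \<phi> (e a) p)" for i
  proof -
    have d1: "(\<lambda>q. e a q $ i) differentiable (at p)" for a using smooth_diff_at[OF smooth_component[OF U se] U p] .
    have d2: "dird \<phi> (e a) differentiable (at p)" for a using smooth_diff_at[OF sphia U p] .
    have "pd i (W i) p = (\<Sum>a\<in>{1,2,3}. pd i (\<lambda>q. e a q $ i * dird \<phi> (e a) q) p)"
      unfolding W_def by (rule pd_sum) (use d1 d2 in auto)
    then show ?thesis using pd_mult[OF d1 d2] by simp
  qed
  have "(\<Sum>i\<in>UNIV. pd i (W i) p + hI p i * W i p)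
      = (\<Sum>a\<in>{1,2,3}. \<Sum>i\<in>UNIV. e a p $ i * pd i (dird \<phi> (e a)) p)
        + (\<Sum>a\<in>{1,2,3}. dird \<phi> (e a) p * ((\<Sum>i\<in>UNIV. pd i (\<lambda>q. e a q $ i) p) + (\<Sum>i\<in>UNIV. e a p $ i * hI p i)))"
  proof -
    have X: "pd i (W i) p + hI p i * W i p = (\<Sum>a\<in>{1,2,3}. e a p $ i * pd i (dird \<phi> (e a)) p
        + dird \<phi> (e a) p * (pd i (\<lambda>q. e a q $ i) p + e a p $ i * hI p i))" for i
      unfolding pdW W_def by (simp add: algebra_simps)
    have Y: "(\<Sum>i\<in>UNIV. e a p $ i * pd i (dird \<phi> (e a)) p + dird \<phi> (e a) p * (pd i (\<lambda>q. e a q $ i) p + e a p $ i * hI p i))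
        = (\<Sum>i\<in>UNIV. e a p $ i * pd i (dird \<phi> (e a)) p)
          + dird \<phi> (e a) p * ((\<Sum>i\<in>UNIV. pd i (\<lambda>q. e a q $ i) p) + (\<Sum>i\<in>UNIV. e a p $ i * hI p i))" for a
      by (simp only: sum.distrib sum_distrib_left distrib_left)
    show ?thesis unfolding X by (subst sum.swap, unfold Y) (simp only: sum.distrib)
  qed
  also have "\<dots> = (\<Sum>b\<in>{1,2,3}. dird (dird \<phi> (e b)) (e b) p)
          + (\<Sum>b\<in>{1,2,3}. dird \<phi> (e b) p * (\<Sum>a\<in>{1,2,3}. th b a a p))"
  proof -
    have "(\<Sum>i\<in>UNIV. e a p $ i * pd i (dird \<phi> (e a)) p) = dird (dird \<phi> (e a)) (e a) p" for a
      using dird_expand_real[OF smooth_diff_at[OF sphia U p]] by simp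
    moreover have "(\<Sum>i\<in>UNIV. pd i (\<lambda>q. e a q $ i) p) + (\<Sum>i\<in>UNIV. e a p $ i * hI p i) = (\<Sum>c\<in>{1,2,3}. th a c c p)"
      if "a \<in> {1,2,3}" for a
      using trace_id[OF p that] .
    ultimately show ?thesis by simp
  qed
  finally show ?thesis unfolding lap .
qed

end


lemma laplace_local:
  assumes U: "open U" and p: "p \<in> U" and eq: "\<And>q. q \<in> U \<Longrightarrow> \<phi> q = \<psi> q"
  shows "laplace_beltrami f \<phi> p = laplace_beltrami f \<psi> p"
proof -
  have "pd i (\<lambda>q. sqrt (det (metric f q)) * (\<Sum>j\<in>UNIV. matrix_inv (metric f q) $ i $ j * pd j \<phi> q)) p
      = pd i (\<lambda>q. sqrt (det (metric f q)) * (\<Sum>j\<in>UNIV. matrix_inv (metric f q) $ i $ j * pd j \<psi> q)) p" for i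
  proof (rule pd_local[OF U p])
    fix q assume q: "q \<in> U"
    have "pd j \<phi> q = pd j \<psi> q" for j by (rule pd_local[OF U q]) (rule eq)
    then show "sqrt (det (metric f q)) * (\<Sum>j\<in>UNIV. matrix_inv (metric f q) $ i $ j * pd j \<phi> q)
      = sqrt (det (metric f q)) * (\<Sum>j\<in>UNIV. matrix_inv (metric f q) $ i $ j * pd j \<psi> q)" by simp
  qed
  then show ?thesis unfolding laplace_beltrami_def by simp
qed

lemma dird_mult:
  fixes h g :: "real^'n::finite \<Rightarrow> real"
  assumes "h differentiable (at p)" "g differentiable (at p)"
  shows "dird (\<lambda>q. h q * g q) X p = h p * dird g X p + dird h X p * g p"
  using dird_bilinear[OF bounded_bilinear_mult assms] .

context geo begin

lemma bracket_real:
  fixes \<phi> :: "real^3 \<Rightarrow> real"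
  assumes p: "p \<in> U" and d: "\<phi> differentiable (at p)" and k: "k \<in> {1,2,3}" and l: "l \<in> {1,2,3}"
  shows "dird \<phi> (\<lambda>q. dird (e l) (e k) q - dird (e k) (e l) q) p
       = (\<Sum>m\<in>{1,2,3}. (th l m k p - th k m l p) * dird \<phi> (e m) p)"
proof -
  define br where "br = (\<lambda>q. dird (e l) (e k) q - dird (e k) (e l) q)"
  have commf: "dird (dird f (e l)) (e k) p - dird (dird f (e k)) (e l) p = dird f br p"
    unfolding br_def using commutator_vec[OF U p sf se se] .
  have brexp: "br p = (\<Sum>m\<in>{1,2,3}. ginner f p (br p) (e m p) *\<^sub>R e m p)"
    using tangent_expand[OF p] .
  have cm: "ginner f p (br p) (e m p) = th l m k p - th k m l p" if m: "m \<in> {1,2,3}" for m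
  proof -
    have "ginner f p (br p) (e m p) = inner (dird f br p) (F m p)"
      using ginner_df[OF fdiff[OF p]] Fk[OF m] by (simp add: dird_def)
    also have "\<dots> = inner (dird (F l) (e k) p - dird (F k) (e l) p) (F m p)"
      using commf Fk[OF k] Fk[OF l] by simp
    finally show ?thesis unfolding th_def by (simp add: inner_diff_left)
  qed
  have "dird \<phi> br p = dird \<phi> (\<lambda>q. \<Sum>m\<in>{1,2,3}. ginner f p (br p) (e m p) *\<^sub>R e m q) p"
    unfolding dird_def using brexp by simp
  also have "\<dots> = (\<Sum>m\<in>{1,2,3}. ginner f p (br p) (e m p) *\<^sub>R dird \<phi> (e m) p)"
    using dird_linear_fd[OF d] .
  also have "\<dots> = (\<Sum>m\<in>{1,2,3}. (th l m k p - th k m l p) * dird \<phi> (e m) p)"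
    by (rule sum.cong) (use cm in auto)
  finally show ?thesis unfolding br_def .
qed

abbreviation "uu \<equiv> th 1 2 3"
abbreviation "vv \<equiv> th 1 2 1"

lemma dd_diff: "q \<in> U \<Longrightarrow> dird (th A B k) (e m) differentiable (at q)"
  using smooth_diff_at[OF smooth_dird[OF U sth se] U] .

lemma harm_u:
  assumes p: "p \<in> U"
  shows "laplace_beltrami f uu p = 0"
proof -
  have G: "\<And>q. q \<in> U \<Longrightarrow> dird uu e2 q = 2 * vv q * uu q"
    "\<And>q. q \<in> U \<Longrightarrow> dird vv e2 q = 1 + (vv q)\<^sup>2 - (uu q)\<^sup>2"
    "\<And>q. q \<in> U \<Longrightarrow> dird vv e1 q = - dird uu e3 q"
    "\<And>q. q \<in> U \<Longrightarrow> dird vv e3 q = dird uu e1 q"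
  proof -
    fix q assume q: "q \<in> U"
    show "dird uu e2 q = 2 * vv q * uu q" using gauss(1)[OF q] .
    show "dird vv e2 q = 1 + (vv q)\<^sup>2 - (uu q)\<^sup>2" using gauss(2)[OF q] .
    show "dird vv e1 q = - dird uu e3 q" using gauss(3)[OF q] by linarith
    show "dird vv e3 q = dird uu e1 q" using gauss(4)[OF q] .
  qed
  note G1 = G[unfolded One_nat_def]
  have e22: "dird (dird uu e2) e2 p = 2 * (vv p * dird uu e2 p + dird vv e2 p * uu p)"
  proof -
    have "dird (dird uu e2) e2 p = dird (\<lambda>q. 2 * (vv q * uu q)) e2 p"
      by (rule dird_eq_local[OF U p]) (simp add: G(1) G1(1))
    also have "\<dots> = 2 * dird (\<lambda>q. vv q * uu q) e2 p"
      using dird_linear[OF bounded_linear_mult_right differentiable_mult[OF thdiff[OF p] thdiff[OF p]], of 2] by simp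
    also have "\<dots> = 2 * (vv p * dird uu e2 p + dird vv e2 p * uu p)"
      using dird_mult[OF thdiff[OF p] thdiff[OF p]] by simp
    finally show ?thesis .
  qed
  have e13: "dird (dird uu e1) e1 p + dird (dird uu e3) e3 p
      = (\<Sum>m\<in>{1,2,3}. (th 3 m 1 p - th 1 m 3 p) * dird vv (e m) p)"
  proof -
    have c: "dird (dird vv (e 3)) (e 1) p - dird (dird vv (e 1)) (e 3) p
        = dird vv (\<lambda>q. dird (e 3) (e 1) q - dird (e 1) (e 3) q) p"
      using commutator_real[OF U p sth se se] .
    have a1: "dird (dird vv e3) e1 p = dird (dird uu e1) e1 p"
      by (rule dird_eq_local[OF U p]) (simp add: G(4) G1(4))
    have a2: "dird (dird vv e1) e3 p = - dird (dird uu e3) e3 p"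
      by (rule dird_neg_local[OF U p _ dd_diff[OF p, of 1 2 3 3, unfolded e_simps]]) (simp add: G(3) G1(3))
    show ?thesis using c a1 a2 bracket_real[OF p thdiff[OF p], of 1 3] by simp
  qed
  have "laplace_beltrami f uu p = (\<Sum>b\<in>{1,2,3}. dird (dird uu (e b)) (e b) p)
          + (\<Sum>b\<in>{1,2,3}. dird uu (e b) p * (\<Sum>a\<in>{1,2,3}. th b a a p))"
    using laplace_frame[OF p sth] .
  also have "\<dots> = 0"
    using e22 e13 G(2-4)[OF p] gauss(1)[OF p]
    by (simp add: cvals[OF p] tabs[OF p] lk_def algebra_simps power2_eq_square)
  finally show ?thesis .
qed

lemma harm_v:
  assumes p: "p \<in> U"
  shows "laplace_beltrami f vv p = 0"
proof -
  have G: "\<And>q. q \<in> U \<Longrightarrow> dird uu e2 q = 2 * vv q * uu q"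
    "\<And>q. q \<in> U \<Longrightarrow> dird vv e2 q = 1 + (vv q)\<^sup>2 - (uu q)\<^sup>2"
    "\<And>q. q \<in> U \<Longrightarrow> dird vv e1 q = - dird uu e3 q"
    "\<And>q. q \<in> U \<Longrightarrow> dird vv e3 q = dird uu e1 q"
  proof -
    fix q assume q: "q \<in> U"
    show "dird uu e2 q = 2 * vv q * uu q" using gauss(1)[OF q] .
    show "dird vv e2 q = 1 + (vv q)\<^sup>2 - (uu q)\<^sup>2" using gauss(2)[OF q] .
    show "dird vv e1 q = - dird uu e3 q" using gauss(3)[OF q] by linarith
    show "dird vv e3 q = dird uu e1 q" using gauss(4)[OF q] .
  qed
  note G1 = G[unfolded One_nat_def]
  have vd: "vv differentiable (at p)" and ud: "uu differentiable (at p)" using thdiff[OF p] by auto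
  have e22: "dird (dird vv e2) e2 p = 2 * vv p * dird vv e2 p - 2 * uu p * dird uu e2 p"
  proof -
    have "dird (dird vv e2) e2 p = dird (\<lambda>q. 1 + (vv q * vv q - uu q * uu q)) e2 p"
      by (rule dird_eq_local[OF U p]) (simp add: G(2) G1(2) power2_eq_square)
    also have "\<dots> = dird (\<lambda>q. 1) e2 p + (dird (\<lambda>q. vv q * vv q) e2 p - dird (\<lambda>q. uu q * uu q) e2 p)"
      using dird_add[of "\<lambda>q. 1" p "\<lambda>q. vv q * vv q - uu q * uu q"] dird_diff[of "\<lambda>q. vv q * vv q" p "\<lambda>q. uu q * uu q"]
        vd ud by simp
    also have "\<dots> = 2 * vv p * dird vv e2 p - 2 * uu p * dird uu e2 p"
      using dird_mult[OF vd vd] dird_mult[OF ud ud] by (simp add: dird_hasd[OF has_derivative_const])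
    finally show ?thesis .
  qed
  have e13: "dird (dird vv e1) e1 p + dird (dird vv e3) e3 p
      = - (\<Sum>m\<in>{1,2,3}. (th 3 m 1 p - th 1 m 3 p) * dird uu (e m) p)"
  proof -
    have c: "dird (dird uu (e 3)) (e 1) p - dird (dird uu (e 1)) (e 3) p
        = dird uu (\<lambda>q. dird (e 3) (e 1) q - dird (e 1) (e 3) q) p"
      using commutator_real[OF U p sth se se] .
    have a1: "dird (dird vv e3) e3 p = dird (dird uu e1) e3 p"
      by (rule dird_eq_local[OF U p]) (simp add: G(4) G1(4))
    have a2: "dird (dird vv e1) e1 p = - dird (dird uu e3) e1 p"
      by (rule dird_neg_local[OF U p _ dd_diff[OF p, of 1 2 3 3, unfolded e_simps]]) (simp add: G(3) G1(3))
    show ?thesis using c a1 a2 bracket_real[OF p thdiff[OF p], of 1 3] by simp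
  qed
  have "laplace_beltrami f vv p = (\<Sum>b\<in>{1,2,3}. dird (dird vv (e b)) (e b) p)
          + (\<Sum>b\<in>{1,2,3}. dird vv (e b) p * (\<Sum>a\<in>{1,2,3}. th b a a p))"
    using laplace_frame[OF p sth] .
  also have "\<dots> = 0"
    using e22 e13 G(1-4)[OF p]
    by (simp add: cvals[OF p] tabs[OF p] lk_def algebra_simps power2_eq_square)
  finally show ?thesis .
qed

lemma v_eq:
  assumes q: "q \<in> U"
  shows "dird (\<lambda>q. ln (lam q)) e2 q = vv q"
proof -
  have lp: "lam q > 0" using lampos q by auto
  have "((\<lambda>q. ln (lam q)) has_derivative (\<lambda>w. inverse (lam q) * frechet_derivative lam (at q) w)) (at q)"
    using has_derivative_compose[OF fd_works[OF lamdiff[OF q]] DERIV_ln[OF lp, unfolded has_field_derivative_def]] .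
  then have "dird (\<lambda>q. ln (lam q)) e2 q = inverse (lam q) * dird lam e2 q"
    using dird_hasd by (simp add: dird_def)
  also have "\<dots> = vv q" using codazzi(3)[OF q] lp by (simp add: field_simps)
  finally show ?thesis .
qed

lemma part_i:
  assumes I: "is_interval I" and gU: "\<gamma> ` I \<subseteq> U"
    and gd: "\<forall>t\<in>I. (\<gamma> has_vector_derivative e2 (\<gamma> t)) (at t within I)"
    and s: "s \<in> I" and t: "t \<in> I"
  shows "uu (\<gamma> s) / (lam (\<gamma> s))\<^sup>2 = uu (\<gamma> t) / (lam (\<gamma> t))\<^sup>2"
proof -
  define il where "il q = inverse (lam q)" for q
  define \<rho> where "\<rho> q = uu q * (il q * il q)" for q
  have lnz: "q \<in> U \<Longrightarrow> lam q \<noteq> 0" for q using lampos by force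
  have ild: "q \<in> U \<Longrightarrow> il differentiable (at q)" for q
    unfolding il_def by (rule differentiable_inverse[OF lamdiff lnz]) auto
  have dil: "q \<in> U \<Longrightarrow> dird il X q = - (il q * dird lam X q * il q)" for q X
    unfolding il_def
    using dird_hasd[OF Deriv.has_derivative_inverse[OF lnz fd_works[OF lamdiff]]] by (simp add: dird_def)
  have iid: "q \<in> U \<Longrightarrow> (\<lambda>q. il q * il q) differentiable (at q)" for q using ild by simp
  have rd: "q \<in> U \<Longrightarrow> \<rho> differentiable (at q)" for q
    unfolding \<rho>_def using thdiff iid by simp
  have drho: "dird \<rho> e2 q = 0" if q: "q \<in> U" for q
  proof -
    have "dird \<rho> e2 q = uu q * (il q * dird il e2 q + dird il e2 q * il q) + dird uu e2 q * (il q * il q)"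
      unfolding \<rho>_def dird_mult[OF thdiff[OF q] iid[OF q]] dird_mult[OF ild[OF q] ild[OF q]] ..
    also have "\<dots> = 0"
      unfolding dil[OF q] gauss(1)[OF q] codazzi(3)[OF q, symmetric] il_def
      using lnz[OF q] by (simp add: field_simps)
    finally show ?thesis .
  qed
  have zero: "((\<lambda>x. \<rho> (\<gamma> x)) has_derivative (\<lambda>h. 0)) (at x within I)" if x: "x \<in> I" for x
  proof -
    have gx: "\<gamma> x \<in> U" using gU x by auto
    have "(\<gamma> has_derivative (\<lambda>h. h *\<^sub>R e2 (\<gamma> x))) (at x within I)"
      using gd x unfolding has_vector_derivative_def by blast
    from has_derivative_compose[OF this fd_works[OF rd[OF gx]]]
    have "((\<lambda>x. \<rho> (\<gamma> x)) has_derivative (\<lambda>h. frechet_derivative \<rho> (at (\<gamma> x)) (h *\<^sub>R e2 (\<gamma> x)))) (at x within I)" .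
    moreover have "(\<lambda>h. frechet_derivative \<rho> (at (\<gamma> x)) (h *\<^sub>R e2 (\<gamma> x))) = (\<lambda>h. 0)"
    proof
      fix h
      have l: "linear (frechet_derivative \<rho> (at (\<gamma> x)))" using linear_frechet_derivative[OF rd[OF gx]] .
      show "frechet_derivative \<rho> (at (\<gamma> x)) (h *\<^sub>R e2 (\<gamma> x)) = 0"
        unfolding linear_scale[OF l] using drho[OF gx] by (simp add: dird_def)
    qed
    ultimately show ?thesis by simp
  qed
  obtain c where c: "\<forall>x\<in>I. \<rho> (\<gamma> x) = c"
    using has_derivative_zero_constant[OF is_interval_convex[OF I] zero] by blast
  have eq: "uu q / (lam q)\<^sup>2 = \<rho> q" for q
    unfolding \<rho>_def il_def by (simp add: power2_eq_square divide_inverse)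
  show ?thesis unfolding eq using c s t by simp
qed

lemma geo_main:
  assumes u: "u = (\<lambda>p. ginner f p (covd f e3 e1 p) (e2 p))"
    and v: "v = (\<lambda>p. dird (\<lambda>q. ln (lam q)) e2 p)"
  shows "(\<forall>(I::real set) (\<gamma>::real \<Rightarrow> real^3).
            is_interval I \<and> \<gamma> ` I \<subseteq> U
            \<and> (\<forall>t\<in>I. (\<gamma> has_vector_derivative e2 (\<gamma> t)) (at t within I))
            \<longrightarrow> (\<forall>s\<in>I. \<forall>t\<in>I. u (\<gamma> s) / (lam (\<gamma> s))^2 = u (\<gamma> t) / (lam (\<gamma> t))^2))
       \<and> (\<forall>p\<in>U. laplace_beltrami f u p = 0 \<and> laplace_beltrami f v p = 0)"
proof (intro conjI allI impI ballI)
  have uU: "\<And>q. q \<in> U \<Longrightarrow> u q = uu q" unfolding u using u_th by simp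
  have vU: "\<And>q. q \<in> U \<Longrightarrow> v q = vv q" unfolding v using v_eq by simp
  fix I :: "real set" and \<gamma> :: "real \<Rightarrow> real^3" and s t
  assume H: "is_interval I \<and> \<gamma> ` I \<subseteq> U \<and> (\<forall>t\<in>I. (\<gamma> has_vector_derivative e2 (\<gamma> t)) (at t within I))"
    and s: "s \<in> I" and t: "t \<in> I"
  have "\<gamma> s \<in> U" "\<gamma> t \<in> U" using H s t by auto
  then show "u (\<gamma> s) / (lam (\<gamma> s))^2 = u (\<gamma> t) / (lam (\<gamma> t))^2"
    using part_i[of I \<gamma> s t] H s t uU by simp
next
  fix p assume p: "p \<in> U"
  have uU: "\<And>q. q \<in> U \<Longrightarrow> u q = uu q" unfolding u using u_th by simp
  have vU: "\<And>q. q \<in> U \<Longrightarrow> v q = vv q" unfolding v using v_eq by simp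
  have "laplace_beltrami f u p = laplace_beltrami f uu p" by (rule laplace_local[OF U p]) (rule uU)
  then show "laplace_beltrami f u p = 0" using harm_u[OF p] by simp
  have "laplace_beltrami f v p = laplace_beltrami f vv p" by (rule laplace_local[OF U p]) (rule vU)
  then show "laplace_beltrami f v p = 0" using harm_v[OF p] by simp
qed

end


theorem lemma1:
  fixes f N :: "real^3 \<Rightarrow> real^5"
    and lam :: "real^3 \<Rightarrow> real"
    and e1 e2 e3 :: "real^3 \<Rightarrow> real^3"
    and U :: "(real^3) set"
  assumes "open U"
    and "smooth_on f U"
    and "\<forall>p\<in>U. norm (f p) = 1"
    and "\<forall>p\<in>U. inj (frechet_derivative f (at p))"
    and "smooth_on N U"
    and "\<forall>p\<in>U. norm (N p) = 1 \<and> inner (N p) (f p) = 0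
            \<and> (\<forall>X. inner (N p) (frechet_derivative f (at p) X) = 0)"
    and "smooth_on lam U" and "\<forall>p\<in>U. lam p > 0"
    and "smooth_on e1 U" and "smooth_on e2 U" and "smooth_on e3 U"
    and "\<forall>p\<in>U. ginner f p (e1 p) (e1 p) = 1 \<and> ginner f p (e2 p) (e2 p) = 1
            \<and> ginner f p (e3 p) (e3 p) = 1 \<and> ginner f p (e1 p) (e2 p) = 0
            \<and> ginner f p (e1 p) (e3 p) = 0 \<and> ginner f p (e2 p) (e3 p) = 0"
    and "\<forall>p\<in>U. dird N e1 p = - (lam p *\<^sub>R dird f e1 p)
            \<and> dird N e2 p = 0
            \<and> dird N e3 p = lam p *\<^sub>R dird f e3 p"
  defines "u \<equiv> (\<lambda>p. ginner f p (covd f e3 e1 p) (e2 p))"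
    and "v \<equiv> (\<lambda>p. dird (\<lambda>q. ln (lam q)) e2 p)"
  shows "(\<forall>(I::real set) (\<gamma>::real \<Rightarrow> real^3).
            is_interval I \<and> \<gamma> ` I \<subseteq> U
            \<and> (\<forall>t\<in>I. (\<gamma> has_vector_derivative e2 (\<gamma> t)) (at t within I))
            \<longrightarrow> (\<forall>s\<in>I. \<forall>t\<in>I. u (\<gamma> s) / (lam (\<gamma> s))^2 = u (\<gamma> t) / (lam (\<gamma> t))^2))
       \<and> (\<forall>p\<in>U. laplace_beltrami f u p = 0 \<and> laplace_beltrami f v p = 0)"
  proof -
  interpret geo f N lam e1 e2 e3 U
    by unfold_locales (use assms in auto)
  show ?thesis by (rule geo_main) (simp_all add: u_def v_def)
qed

end
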